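(* Let $\Omega\subset\mathbb{R}^N$ be open and bounded, $1<p<N$, $F:\Omega\times(0,\infty)\to[0,\infty)$ a Carathéodory function, and let $u$ be a weak solution of $-\Delta_p u=F(x,u)$, $u>0$ in $\Omega$, $u=0$ on $\partial\Omega$. Then for every nonnegative $\varphi\in W^{1,p}_0(\Omega)$ one has $F(x,u)\varphi\in L^1(\Omega)$, and for every $\varphi\in W^{1,p}_0(\Omega)$ one has $F(x,u)\varphi\in L^1(\Omega)$ and $\int_\Omega|\nabla u|^{p-2}\nabla u\cdot\nabla\varphi=\int_\Omega F(x,u)\varphi$.
   Context: $\Delta_p u=\operatorname{div}(|\nabla u|^{p-2}\nabla u)$. A weak solution of $-\Delta_p u=F(x,u)$, $u>0$ in $\Omega$, $u=0$ on $\partial\Omega$, is a function $u\in W^{1,p}_0(\Omega)$ with $u>0$ a.e. in $\Omega$, such that $F(x,u)\in L^1_{\rm loc}(\Omega)$ and $\int_\Omega|\nabla u|^{p-2}\nabla u\cdot\nabla\varphi=\int_\Omega F(x,u)\varphi$ for all $\varphi\in C^1_c(\Omega)$. *)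

theory Defs
  imports "HOL-Analysis.Analysis"
begin

text \<open>Functions on an open set \<Omega> of a Euclidean space 'a (dimension N = DIM('a)).
  All integrals are Lebesgue integrals over \<Omega>, i.e. w.r.t. lebesgue_on \<Omega>.\<close>

definition C1c_grad :: "'a::euclidean_space set \<Rightarrow> ('a \<Rightarrow> real) \<Rightarrow> ('a \<Rightarrow> 'a) \<Rightarrow> bool" where
  "C1c_grad \<Omega> phi Dphi \<longleftrightarrow>
     (\<forall>x. (phi has_derivative (\<lambda>h. Dphi x \<bullet> h)) (at x)) \<and> continuous_on UNIV Dphi \<and>
     (\<exists>K. compact K \<and> K \<subseteq> \<Omega> \<and> (\<forall>x. x \<notin> K \<longrightarrow> phi x = 0))"

definition locally_integrable_on :: "'a::euclidean_space set \<Rightarrow> ('a \<Rightarrow> 'b::{banach,second_countable_topology}) \<Rightarrow> bool" where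
  "locally_integrable_on \<Omega> f \<longleftrightarrow>
     (\<forall>K. compact K \<and> K \<subseteq> \<Omega> \<longrightarrow> integrable (lebesgue_on K) f)"

definition weak_gradient :: "'a::euclidean_space set \<Rightarrow> ('a \<Rightarrow> real) \<Rightarrow> ('a \<Rightarrow> 'a) \<Rightarrow> bool" where
  "weak_gradient \<Omega> u g \<longleftrightarrow>
     locally_integrable_on \<Omega> u \<and> locally_integrable_on \<Omega> g \<and>
     (\<forall>phi Dphi. C1c_grad \<Omega> phi Dphi \<longrightarrow>
        (\<forall>i\<in>Basis. integral\<^sup>L (lebesgue_on \<Omega>) (\<lambda>x. u x * (Dphi x \<bullet> i))
                    = - integral\<^sup>L (lebesgue_on \<Omega>) (\<lambda>x. (g x \<bullet> i) * phi x)))"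

definition Lp_on :: "real \<Rightarrow> 'a::euclidean_space set \<Rightarrow> ('a \<Rightarrow> 'b::{banach,second_countable_topology}) \<Rightarrow> bool" where
  "Lp_on p \<Omega> f \<longleftrightarrow> f \<in> borel_measurable (lebesgue_on \<Omega>) \<and>
     integrable (lebesgue_on \<Omega>) (\<lambda>x. norm (f x) powr p)"

text \<open>W^{1,p}_0(\<Omega>): closure of C^1_c(\<Omega>) in the W^{1,p}(\<Omega>) norm.\<close>
definition W01p :: "real \<Rightarrow> 'a::euclidean_space set \<Rightarrow> ('a \<Rightarrow> real) set" where
  "W01p p \<Omega> = {u. Lp_on p \<Omega> u \<and>
     (\<exists>g. weak_gradient \<Omega> u g \<and> Lp_on p \<Omega> g \<and>
        (\<exists>phis Dphis. (\<forall>k::nat. C1c_grad \<Omega> (phis k) (Dphis k)) \<and>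
           (\<lambda>k. integral\<^sup>L (lebesgue_on \<Omega>) (\<lambda>x. \<bar>phis k x - u x\<bar> powr p)) \<longlonglongrightarrow> 0 \<and>
           (\<lambda>k. integral\<^sup>L (lebesgue_on \<Omega>) (\<lambda>x. norm (Dphis k x - g x) powr p)) \<longlonglongrightarrow> 0))}"

definition caratheodory_nonneg :: "'a::euclidean_space set \<Rightarrow> ('a \<Rightarrow> real \<Rightarrow> real) \<Rightarrow> bool" where
  "caratheodory_nonneg \<Omega> F \<longleftrightarrow>
     (\<forall>s>0. (\<lambda>x. F x s) \<in> borel_measurable (lebesgue_on \<Omega>)) \<and>
     (AE x in lebesgue_on \<Omega>. continuous_on {0<..} (F x)) \<and>
     (\<forall>x\<in>\<Omega>. \<forall>s>0. F x s \<ge> 0)"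

definition weak_solution :: "real \<Rightarrow> 'a::euclidean_space set \<Rightarrow> ('a \<Rightarrow> real \<Rightarrow> real) \<Rightarrow> ('a \<Rightarrow> real) \<Rightarrow> bool" where
  "weak_solution p \<Omega> F u \<longleftrightarrow>
     u \<in> W01p p \<Omega> \<and> (AE x in lebesgue_on \<Omega>. u x > 0) \<and>
     locally_integrable_on \<Omega> (\<lambda>x. F x (u x)) \<and>
     (\<forall>g. weak_gradient \<Omega> u g \<longrightarrow>
        (\<forall>phi Dphi. C1c_grad \<Omega> phi Dphi \<longrightarrow>
           integral\<^sup>L (lebesgue_on \<Omega>) (\<lambda>x. norm (g x) powr (p - 2) * (g x \<bullet> Dphi x))
           = integral\<^sup>L (lebesgue_on \<Omega>) (\<lambda>x. F x (u x) * phi x)))"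

end

theory Submission
  imports Defs
begin

definition mm :: "real \<Rightarrow> real" where "mm t = (max 0 t)^2 / (1 + (max 0 t)^2)"
definition mm' :: "real \<Rightarrow> real" where "mm' t = 2 * max 0 t / (1 + t^2)^2"

lemma onepsq: "1 + x^2 \<noteq> (0::real)" "0 < 1 + x^2"
  by (smt (verit) zero_le_power2)+

lemma mm_bounds: "0 \<le> mm t" "mm t \<le> 1" "t \<le> 0 \<Longrightarrow> mm t = 0" "mm t \<le> t^2"
proof -
  have p: "0 < 1 + (max 0 t)^2" by (rule onepsq)
  show "0 \<le> mm t" unfolding mm_def by simp
  show "mm t \<le> 1" unfolding mm_def using p by (simp add: divide_le_eq)
  show "t \<le> 0 \<Longrightarrow> mm t = 0" unfolding mm_def by simp
  have "(max 0 t)^2 \<le> t^2" by (simp add: max_def)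
  moreover have "(max 0 t)^2 \<le> (max 0 t)^2 * (1 + (max 0 t)^2)"
    by (simp add: distrib_left)
  then have "(max 0 t)^2 / (1 + (max 0 t)^2) \<le> (max 0 t)^2"
    using p by (simp add: divide_le_eq)
  ultimately show "mm t \<le> t^2" unfolding mm_def by linarith
qed

lemma mm_cont: "continuous_on UNIV mm" "continuous_on UNIV mm'"
  unfolding mm_def mm'_def by (auto intro!: continuous_intros simp: onepsq)


lemma mm_deriv: "(mm has_real_derivative mm' t) (at t)"
proof -
  consider "t < 0" | "t = 0" | "t > 0" by linarith
  then show ?thesis
  proof cases
    case 1
    have z: "mm' t = 0" using 1 by (simp add: mm'_def)
    have d: "((\<lambda>_. 0::real) has_real_derivative 0) (at t)" by simp
    have "(mm has_real_derivative 0) (at t)"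
    proof (rule has_field_derivative_transform_within_open[OF d, of "{..<0}"])
      show "x \<in> {..<0} \<Longrightarrow> 0 = mm x" for x by (simp add: mm_bounds)
    qed (use 1 in auto)
    then show ?thesis using z by simp
  next
    case 3
    have e: "mm' t = (2*t * (1 + t^2) - t^2 * (2 * t)) / ((1 + t^2) * (1 + t^2))"
      using 3 by (simp add: mm'_def algebra_simps power2_eq_square)
    have d1: "((\<lambda>t. t^2) has_real_derivative 2*t) (at t)"
      using DERIV_pow[of 2 t] by simp
    have d2: "((\<lambda>t. 1 + t^2) has_real_derivative 2*t) (at t)"
      using DERIV_add[OF DERIV_const d1] by simp
    have d: "((\<lambda>t. t^2 / (1 + t^2)) has_real_derivative (2*t * (1 + t^2) - t^2 * (2 * t)) / ((1 + t^2) * (1 + t^2))) (at t)"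
      by (rule DERIV_divide[OF d1 d2 onepsq(1)])
    have "(mm has_real_derivative (2*t * (1 + t^2) - t^2 * (2 * t)) / ((1 + t^2) * (1 + t^2))) (at t)"
    proof (rule has_field_derivative_transform_within_open[OF d, of "{0<..}"])
      show "x \<in> {0<..} \<Longrightarrow> x^2 / (1 + x^2) = mm x" for x by (simp add: mm_def)
    qed (use 3 in auto)
    then show ?thesis using e by simp
  next
    case 2
    have "((\<lambda>y. (mm y - mm 0) / (y - 0)) \<longlongrightarrow> 0) (at 0)"
    proof (rule Lim_null_comparison[where g="\<lambda>y. \<bar>y\<bar>"])
      show "\<forall>\<^sub>F x in at 0. norm ((mm x - mm 0) / (x - 0)) \<le> \<bar>x\<bar>"
      proof (intro always_eventually allI)
        fix y :: real
        have "0 \<le> mm y" "mm y \<le> y^2" "mm 0 = 0" by (auto simp: mm_bounds)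
        then have "\<bar>mm y - mm 0\<bar> \<le> \<bar>y\<bar> * \<bar>y\<bar>" by (simp add: power2_eq_square)
        then show "norm ((mm y - mm 0) / (y - 0)) \<le> \<bar>y\<bar>"
          by (cases "y = 0") (auto simp: abs_div divide_le_eq)
      qed
      show "((\<lambda>y. \<bar>y\<bar>) \<longlongrightarrow> 0) (at (0::real))"
        using tendsto_rabs[OF tendsto_ident_at[of 0 UNIV]] by simp
    qed
    then show ?thesis using 2 by (simp add: has_field_derivative_iff mm'_def)
  qed
qed

lemma mm_lim: "((\<lambda>n. mm (real n * c)) \<longlonglongrightarrow> 1)" if "c > 0"
proof -
  have eq: "mm (real n * c) = 1 - 1 / (1 + (real n * c)^2)" for n
  proof -
    have "max 0 (real n * c) = real n * c" using that by simp
    then show ?thesis using onepsq[of "real n * c"] by (simp add: mm_def field_simps)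
  qed
  have "filterlim (\<lambda>n. real n * c) at_top sequentially"
    by (rule filterlim_at_top_mult_tendsto_pos[OF tendsto_const that filterlim_real_sequentially])
  then have "filterlim (\<lambda>n. (real n * c)^2) at_top sequentially"
    by (intro filterlim_pow_at_top) auto
  then have "filterlim (\<lambda>n. 1 + (real n * c)^2) at_top sequentially"
    by (rule filterlim_tendsto_add_at_top[OF tendsto_const])
  then have "filterlim (\<lambda>n. 1 + (real n * c)^2) at_infinity sequentially"
    by (rule filterlim_at_top_imp_at_infinity)
  then have "((\<lambda>n. 1 / (1 + (real n * c)^2)) \<longlonglongrightarrow> 0)"
    by (rule tendsto_divide_0[OF tendsto_const])
  then have "((\<lambda>n. 1 - 1 / (1 + (real n * c)^2)) \<longlonglongrightarrow> 1 - 0)"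
    by (intro tendsto_diff tendsto_const)
  then show ?thesis by (simp add: eq)
qed

definition bmp :: "real \<Rightarrow> real \<Rightarrow> real \<Rightarrow> real \<Rightarrow> real" where
  "bmp n \<alpha> \<beta> s = mm (n*(s-\<alpha>)) * mm (n*(\<beta>-s))"
definition bmp' :: "real \<Rightarrow> real \<Rightarrow> real \<Rightarrow> real \<Rightarrow> real" where
  "bmp' n \<alpha> \<beta> s = mm' (n*(s-\<alpha>)) * n * mm (n*(\<beta>-s)) + mm' (n*(\<beta>-s)) * (- n) * mm (n*(s-\<alpha>))"

lemma bmp_deriv: "(bmp n \<alpha> \<beta> has_real_derivative bmp' n \<alpha> \<beta> s) (at s)"
proof -
  have g1: "((\<lambda>s. n*(s-\<alpha>)) has_real_derivative n) (at s)"
    by (auto intro!: derivative_eq_intros)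
  have g2: "((\<lambda>s. n*(\<beta>-s)) has_real_derivative (- n)) (at s)"
    by (auto intro!: derivative_eq_intros)
  have d1: "((\<lambda>s. mm (n*(s-\<alpha>))) has_real_derivative mm' (n*(s-\<alpha>)) * n) (at s)"
    by (rule DERIV_chain2[OF mm_deriv g1])
  have d2: "((\<lambda>s. mm (n*(\<beta>-s))) has_real_derivative mm' (n*(\<beta>-s)) * (- n)) (at s)"
    by (rule DERIV_chain2[OF mm_deriv g2])
  show ?thesis unfolding bmp_def[abs_def] bmp'_def
    by (rule DERIV_mult[OF d1 d2])
qed

lemma bmp_cont: "continuous_on UNIV (bmp n \<alpha> \<beta>)" "continuous_on UNIV (bmp' n \<alpha> \<beta>)"
proof -
  have c: "continuous_on UNIV (\<lambda>s. mm (n*(s-\<alpha>)))" "continuous_on UNIV (\<lambda>s. mm (n*(\<beta>-s)))"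
     "continuous_on UNIV (\<lambda>s. mm' (n*(s-\<alpha>)))" "continuous_on UNIV (\<lambda>s. mm' (n*(\<beta>-s)))"
    by (auto intro!: continuous_on_compose2[OF mm_cont(1)] continuous_on_compose2[OF mm_cont(2)] continuous_intros)
  show "continuous_on UNIV (bmp n \<alpha> \<beta>)" unfolding bmp_def[abs_def]
    using c by (intro continuous_intros) auto
  show "continuous_on UNIV (bmp' n \<alpha> \<beta>)" unfolding bmp'_def[abs_def]
    using c by (intro continuous_intros) auto
qed

lemma bmp_bounds: "0 \<le> bmp n \<alpha> \<beta> s" "bmp n \<alpha> \<beta> s \<le> 1"
  "0 \<le> n \<Longrightarrow> s \<notin> {\<alpha><..<\<beta>} \<Longrightarrow> bmp n \<alpha> \<beta> s = 0"
proof -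
  show "0 \<le> bmp n \<alpha> \<beta> s" unfolding bmp_def using mm_bounds by simp
  show "bmp n \<alpha> \<beta> s \<le> 1" unfolding bmp_def using mm_bounds
    by (meson mult_le_one)
  assume "0 \<le> n" "s \<notin> {\<alpha><..<\<beta>}"
  then have "n*(s-\<alpha>) \<le> 0 \<or> n*(\<beta>-s) \<le> 0"
    by (auto simp: mult_nonneg_nonpos)
  then show "bmp n \<alpha> \<beta> s = 0" unfolding bmp_def using mm_bounds by auto
qed

lemma bmp_lim: "((\<lambda>k. bmp (real k) \<alpha> \<beta> s) \<longlonglongrightarrow> indicator {\<alpha><..<\<beta>} s)"
proof (cases "s \<in> {\<alpha><..<\<beta>}")
  case True
  then have "((\<lambda>k. mm (real k * (s-\<alpha>)) * mm (real k * (\<beta>-s))) \<longlonglongrightarrow> 1 * 1)"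
    by (intro tendsto_mult mm_lim) auto
  then show ?thesis using True by (simp add: bmp_def)
next
  case False
  then show ?thesis by (simp add: bmp_bounds(3))
qed

lemma C1c_facts:
  fixes \<phi> :: "'a::euclidean_space \<Rightarrow> real"
  assumes "C1c_grad \<Omega> \<phi> D\<phi>"
  obtains K B where "compact K" "K \<subseteq> \<Omega>" "\<And>x. x \<notin> K \<Longrightarrow> \<phi> x = 0" "\<And>x. x \<notin> K \<Longrightarrow> D\<phi> x = 0"
    "continuous_on UNIV \<phi>" "continuous_on UNIV D\<phi>" "\<And>x. \<bar>\<phi> x\<bar> \<le> B" "\<And>x. norm (D\<phi> x) \<le> B"
    "\<And>x. (\<phi> has_derivative (\<lambda>h. D\<phi> x \<bullet> h)) (at x)"
proof -
  from assms obtain K where K: "compact K" "K \<subseteq> \<Omega>" "\<And>x. x \<notin> K \<Longrightarrow> \<phi> x = 0"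
    and der: "\<And>x. (\<phi> has_derivative (\<lambda>h. D\<phi> x \<bullet> h)) (at x)" and cD: "continuous_on UNIV D\<phi>"
    unfolding C1c_grad_def by blast
  have c\<phi>: "continuous_on UNIV \<phi>"
    using der by (meson continuous_at_imp_continuous_on has_derivative_continuous)
  have D0: "D\<phi> x = 0" if "x \<notin> K" for x
  proof -
    have "open (- K)" using K(1) by (simp add: compact_imp_closed open_Compl)
    then have "((\<lambda>_. 0::real) has_derivative (\<lambda>h. D\<phi> x \<bullet> h)) (at x)"
      using has_derivative_transform_within_open[OF der[of x] \<open>open (-K)\<close>, of "\<lambda>_. 0"] that K(3) by auto
    moreover have "((\<lambda>_. 0::real) has_derivative (\<lambda>h. 0)) (at x)" by simp
    ultimately have "(\<lambda>h. D\<phi> x \<bullet> h) = (\<lambda>h. 0)"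
      using has_derivative_unique by blast
    then have "D\<phi> x \<bullet> D\<phi> x = 0" by metis
    then show ?thesis by simp
  qed
  have b1: "bounded (\<phi> ` K)" "bounded (D\<phi> ` K)"
    using K(1) c\<phi> cD compact_continuous_image compact_imp_bounded continuous_on_subset
    by (metis subset_UNIV)+
  then obtain B1 B2 where B1: "\<And>x. x \<in> K \<Longrightarrow> \<bar>\<phi> x\<bar> \<le> B1" and B2: "\<And>x. x \<in> K \<Longrightarrow> norm (D\<phi> x) \<le> B2"
    unfolding bounded_iff by (metis image_eqI real_norm_def)
  show ?thesis
  proof (rule that[of K "max (max B1 B2) 0"])
    show "\<bar>\<phi> x\<bar> \<le> max (max B1 B2) 0" for x
      using B1[of x] K(3)[of x] by (cases "x \<in> K") auto
    show "norm (D\<phi> x) \<le> max (max B1 B2) 0" for x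
      using B2[of x] D0[of x] by (cases "x \<in> K") auto
  qed (use K D0 c\<phi> cD der in auto)
qed

definition bx :: "real \<Rightarrow> 'a::euclidean_space \<Rightarrow> 'a \<Rightarrow> 'a \<Rightarrow> real" where
  "bx n a b x = (\<Prod>i\<in>Basis. bmp n (a\<bullet>i) (b\<bullet>i) (x\<bullet>i))"
definition bx' :: "real \<Rightarrow> 'a::euclidean_space \<Rightarrow> 'a \<Rightarrow> 'a \<Rightarrow> 'a" where
  "bx' n a b x = (\<Sum>i\<in>Basis. (bmp' n (a\<bullet>i) (b\<bullet>i) (x\<bullet>i) * (\<Prod>j\<in>Basis - {i}. bmp n (a\<bullet>j) (b\<bullet>j) (x\<bullet>j))) *\<^sub>R i)"

lemma bx_deriv: "(bx n a b has_derivative (\<lambda>h. bx' n a b x \<bullet> h)) (at x)"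
proof -
  have fi: "((\<lambda>x. bmp n (a\<bullet>i) (b\<bullet>i) (x\<bullet>i)) has_derivative (\<lambda>y. (y\<bullet>i) * bmp' n (a\<bullet>i) (b\<bullet>i) (x\<bullet>i))) (at x)" for i
  proof (rule DERIV_compose_FDERIV[OF bmp_deriv])
    show "((\<lambda>x. x \<bullet> i) has_derivative (\<lambda>y. y \<bullet> i)) (at x)"
      by (simp add: bounded_linear_imp_has_derivative bounded_linear_inner_left)
  qed
  have "((\<lambda>x. \<Prod>i\<in>Basis. bmp n (a\<bullet>i) (b\<bullet>i) (x\<bullet>i)) has_derivative
      (\<lambda>y. \<Sum>i\<in>Basis. (y\<bullet>i) * bmp' n (a\<bullet>i) (b\<bullet>i) (x\<bullet>i) * (\<Prod>j\<in>Basis - {i}. bmp n (a\<bullet>j) (b\<bullet>j) (x\<bullet>j)))) (at x)"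
    by (rule has_derivative_prod[OF fi])
  moreover have "(\<lambda>y. \<Sum>i\<in>Basis. (y\<bullet>i) * bmp' n (a\<bullet>i) (b\<bullet>i) (x\<bullet>i) * (\<Prod>j\<in>Basis - {i}. bmp n (a\<bullet>j) (b\<bullet>j) (x\<bullet>j)))
     = (\<lambda>h. bx' n a b x \<bullet> h)"
    unfolding bx'_def by (auto simp: inner_sum_left mult_ac intro!: ext sum.cong) (simp add: inner_commute)
  ultimately show ?thesis unfolding bx_def[abs_def] by simp
qed

lemma bx_cont: "continuous_on UNIV (bx' n a b)" "continuous_on UNIV (bx n a b)"
proof -
  have c: "continuous_on UNIV (\<lambda>x. bmp n (a\<bullet>j) (b\<bullet>j) (x\<bullet>j))" "continuous_on UNIV (\<lambda>x. bmp' n (a\<bullet>j) (b\<bullet>j) (x\<bullet>j))" for j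
    by (auto intro!: continuous_on_compose2[OF bmp_cont(1)] continuous_on_compose2[OF bmp_cont(2)] continuous_intros)
  show "continuous_on UNIV (bx' n a b)" unfolding bx'_def[abs_def]
    by (intro continuous_intros c)
  show "continuous_on UNIV (bx n a b)" unfolding bx_def[abs_def]
    by (intro continuous_intros c)
qed

lemma bx_zero: "0 \<le> n \<Longrightarrow> x \<notin> box a b \<Longrightarrow> bx n a b x = 0"
proof -
  assume "0 \<le> n" "x \<notin> box a b"
  then obtain i where i: "i \<in> Basis" "x\<bullet>i \<notin> {a\<bullet>i<..<b\<bullet>i}" by (auto simp: mem_box)
  then have "bmp n (a\<bullet>i) (b\<bullet>i) (x\<bullet>i) = 0" using bmp_bounds(3) \<open>0 \<le> n\<close> by blast
  then show ?thesis unfolding bx_def using i by (intro prod_zero) auto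
qed

lemma bx_bounds: "0 \<le> bx n a b x" "bx n a b x \<le> 1"
  unfolding bx_def by (auto intro!: prod_nonneg prod_le_1 simp: bmp_bounds)

lemma bx_C1c: "cbox a b \<subseteq> \<Omega> \<Longrightarrow> 0 \<le> n \<Longrightarrow> C1c_grad \<Omega> (bx n a b) (bx' n a b)"
  unfolding C1c_grad_def
proof (intro conjI allI exI[of _ "cbox a b"] impI)
  show "x \<notin> cbox a b \<Longrightarrow> bx n a b x = 0" if "0 \<le> n" for x
    using bx_zero[OF that, of x a b] box_subset_cbox[of a b] by blast
qed (auto simp: compact_cbox bx_deriv bx_cont)

lemma bx_lim: "((\<lambda>k. bx (real k) a b x) \<longlonglongrightarrow> indicator (box a b) x)"
proof -
  have "((\<lambda>k. bx (real k) a b x) \<longlonglongrightarrow> (\<Prod>i\<in>Basis. indicator {a\<bullet>i<..<b\<bullet>i} (x\<bullet>i)))"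
    unfolding bx_def by (intro tendsto_prod bmp_lim)
  moreover have "(\<Prod>i\<in>Basis. indicator {a\<bullet>i<..<b\<bullet>i} (x\<bullet>i) :: real) = indicator (box a b) x"
    by (auto simp: indicator_def mem_box prod_zero)
  ultimately show ?thesis by simp
qed

lemma open_leb: "open S \<Longrightarrow> S \<in> sets lebesgue"
  by (simp add: borel_open)
lemma compact_leb: "compact S \<Longrightarrow> S \<in> sets lebesgue"
  by (simp add: borel_compact)

lemma cont_meas: "continuous_on UNIV f \<Longrightarrow> S \<in> sets lebesgue \<Longrightarrow> f \<in> borel_measurable (lebesgue_on S)"
  by (rule continuous_imp_measurable_on_sets_lebesgue) (auto intro: continuous_on_subset)

lemma sub_integrable_iff:
  fixes g :: "'a::euclidean_space \<Rightarrow> 'b::{banach,second_countable_topology}"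
  assumes "K \<in> sets lebesgue" "\<Omega> \<in> sets lebesgue" "K \<subseteq> \<Omega>" "\<And>x. x \<notin> K \<Longrightarrow> g x = 0"
  shows "integrable (lebesgue_on \<Omega>) g \<longleftrightarrow> integrable (lebesgue_on K) g"
    "integral\<^sup>L (lebesgue_on \<Omega>) g = integral\<^sup>L (lebesgue_on K) g"
proof -
  have e: "(\<lambda>x. indicator \<Omega> x *\<^sub>R g x) = (\<lambda>x. indicator K x *\<^sub>R g x)"
  proof (rule ext)
    fix x show "indicator \<Omega> x *\<^sub>R g x = indicator K x *\<^sub>R g x"
      using assms(3) assms(4)[of x] by (cases "x \<in> K") (auto simp: indicator_def)
  qed
  show "integrable (lebesgue_on \<Omega>) g \<longleftrightarrow> integrable (lebesgue_on K) g"
    using assms(1,2) by (simp add: integrable_restrict_space e)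
  show "integral\<^sup>L (lebesgue_on \<Omega>) g = integral\<^sup>L (lebesgue_on K) g"
    using assms(1,2) by (simp add: integral_restrict_space e)
qed

lemma LI_mult_C1c:
  fixes f :: "'a::euclidean_space \<Rightarrow> real"
  assumes "open \<Omega>" "locally_integrable_on \<Omega> f" "C1c_grad \<Omega> \<psi> D\<psi>"
  shows "integrable (lebesgue_on \<Omega>) (\<lambda>x. f x * \<psi> x)"
proof -
  obtain K B where K: "compact K" "K \<subseteq> \<Omega>" "\<And>x. x \<notin> K \<Longrightarrow> \<psi> x = 0"
    "continuous_on UNIV \<psi>" "\<And>x. \<bar>\<psi> x\<bar> \<le> B"
    using C1c_facts[OF assms(3)] by metis
  have fK: "integrable (lebesgue_on K) f" using assms(2) K unfolding locally_integrable_on_def by blast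
  have "integrable (lebesgue_on K) (\<lambda>x. B * f x)" using fK by simp
  moreover have "(\<lambda>x. f x * \<psi> x) \<in> borel_measurable (lebesgue_on K)"
    using fK cont_meas[OF K(4) compact_leb[OF K(1)]] by measurable
  moreover have "AE x in lebesgue_on K. norm (f x * \<psi> x) \<le> norm (B * f x)"
  proof (intro AE_I2)
    fix x
    have "\<bar>f x\<bar> * \<bar>\<psi> x\<bar> \<le> \<bar>f x\<bar> * B" using K(5)[of x] by (simp add: mult_left_mono)
    moreover have "0 \<le> B" using K(5)[of x] by linarith
    ultimately show "norm (f x * \<psi> x) \<le> norm (B * f x)" by (simp add: abs_mult mult.commute)
  qed
  ultimately have "integrable (lebesgue_on K) (\<lambda>x. f x * \<psi> x)"
    by (rule Bochner_Integration.integrable_bound)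
  then show ?thesis
    using sub_integrable_iff(1)[OF compact_leb[OF K(1)] open_leb[OF assms(1)] K(2), of "\<lambda>x. f x * \<psi> x"] K(3)
    by simp
qed

lemma LI_meas:
  fixes f :: "'a::euclidean_space \<Rightarrow> 'b::{banach,second_countable_topology}"
  assumes "open \<Omega>" "locally_integrable_on \<Omega> f"
  shows "f \<in> borel_measurable (lebesgue_on \<Omega>)"
proof -
  obtain \<D> where D: "countable \<D>" "\<D> \<subseteq> Pow \<Omega>" "\<And>X. X \<in> \<D> \<Longrightarrow> \<exists>a b. X = cbox a b" "\<Union>\<D> = \<Omega>"
    using open_countable_Union_open_cbox[OF assms(1)] by metis
  show ?thesis
  proof (rule measurable_piecewise_restrict[OF D(1)])
    fix X assume X: "X \<in> \<D>"
    then obtain a b where ab: "X = cbox a b" using D(3) by blast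
    have XO: "X \<subseteq> \<Omega>" using X D(2) by blast
    have "X \<in> sets lebesgue" using ab by simp
    then show "X \<inter> space (lebesgue_on \<Omega>) \<in> sets (lebesgue_on \<Omega>)"
      using XO open_leb[OF assms(1)] by (simp add: sets_restrict_space_iff Int_absorb2)
    have "integrable (lebesgue_on X) f"
      using assms(2) XO ab unfolding locally_integrable_on_def by auto
    then have "f \<in> borel_measurable (lebesgue_on X)" by simp
    moreover have "restrict_space (lebesgue_on \<Omega>) X = lebesgue_on X"
      using restrict_restrict_space[of \<Omega> lebesgue X] XO open_leb[OF assms(1)] \<open>X \<in> sets lebesgue\<close>
      by (simp add: Int_absorb1)
    ultimately show "f \<in> borel_measurable (restrict_space (lebesgue_on \<Omega>) X)" by simp
  qed (use D(4) in auto)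
qed

lemma box_int_zero:
  fixes f :: "'a::euclidean_space \<Rightarrow> real"
  assumes "open \<Omega>" "locally_integrable_on \<Omega> f"
    and H: "\<And>\<psi> D\<psi>. C1c_grad \<Omega> \<psi> D\<psi> \<Longrightarrow> integral\<^sup>L (lebesgue_on \<Omega>) (\<lambda>x. f x * \<psi> x) = 0"
    and sub: "cbox a b \<subseteq> \<Omega>"
  shows "integral\<^sup>L lebesgue (\<lambda>x. indicator (box a b) x * f x) = 0"
proof -
  let ?C = "cbox a b"
  have fC: "integrable (lebesgue_on ?C) f" using assms(2) sub unfolding locally_integrable_on_def by auto
  have Cl: "?C \<in> sets lebesgue" by simp
  have z: "integral\<^sup>L (lebesgue_on ?C) (\<lambda>x. f x * bx (real k) a b x) = 0" for k
  proof -
    have "integral\<^sup>L (lebesgue_on \<Omega>) (\<lambda>x. f x * bx (real k) a b x) = 0"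
      by (rule H[OF bx_C1c[OF sub]]) simp
    moreover have "integral\<^sup>L (lebesgue_on \<Omega>) (\<lambda>x. f x * bx (real k) a b x)
        = integral\<^sup>L (lebesgue_on ?C) (\<lambda>x. f x * bx (real k) a b x)"
    proof (rule sub_integrable_iff(2)[OF Cl open_leb[OF assms(1)] sub])
      show "x \<notin> ?C \<Longrightarrow> f x * bx (real k) a b x = 0" for x
        using bx_zero[of "real k" x a b] box_subset_cbox[of a b] by auto
    qed
    ultimately show ?thesis by simp
  qed
  have fm: "f \<in> borel_measurable (lebesgue_on ?C)" using fC by simp
  have bxm: "bx (real k) a b \<in> borel_measurable (lebesgue_on ?C)" for k
    by (rule cont_meas[OF bx_cont(2) Cl])
  have "(\<lambda>k. integral\<^sup>L (lebesgue_on ?C) (\<lambda>x. f x * bx (real k) a b x))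
      \<longlonglongrightarrow> integral\<^sup>L (lebesgue_on ?C) (\<lambda>x. f x * indicator (box a b) x)"
  proof (rule integral_dominated_convergence[where w="\<lambda>x. \<bar>f x\<bar>"])
    show "(\<lambda>x. f x * indicator (box a b) x) \<in> borel_measurable (lebesgue_on ?C)"
      using fm by (intro borel_measurable_times borel_measurable_indicator') (auto simp: sets_restrict_space_iff)
    show "(\<lambda>x. f x * bx (real k) a b x) \<in> borel_measurable (lebesgue_on ?C)" for k
      using fm bxm[of k] by (rule borel_measurable_times)
    show "integrable (lebesgue_on ?C) (\<lambda>x. \<bar>f x\<bar>)" using fC by simp
    show "AE x in lebesgue_on ?C. (\<lambda>k. f x * bx (real k) a b x) \<longlonglongrightarrow> f x * indicator (box a b) x"
      by (intro AE_I2 tendsto_mult tendsto_const bx_lim)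
    show "AE x in lebesgue_on ?C. norm (f x * bx (real k) a b x) \<le> \<bar>f x\<bar>" for k
      using bx_bounds[of "real k" a b] by (intro AE_I2) (simp add: abs_mult mult_left_le)
  qed
  then have "integral\<^sup>L (lebesgue_on ?C) (\<lambda>x. f x * indicator (box a b) x) = 0"
    using z by (simp add: LIMSEQ_const_iff)
  moreover have "integral\<^sup>L (lebesgue_on ?C) (\<lambda>x. f x * indicator (box a b) x)
      = integral\<^sup>L lebesgue (\<lambda>x. indicator (box a b) x * f x)"
  proof -
    have "integral\<^sup>L (lebesgue_on ?C) (\<lambda>x. f x * indicator (box a b) x)
        = integral\<^sup>L lebesgue (\<lambda>x. indicator ?C x *\<^sub>R (f x * indicator (box a b) x))"
      by (rule integral_restrict_space) simp
    also have "(\<lambda>x. indicator ?C x *\<^sub>R (f x * indicator (box a b) x)) = (\<lambda>x. indicator (box a b) x * f x)"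
    proof (rule ext)
      fix x show "indicator ?C x *\<^sub>R (f x * indicator (box a b) x) = indicator (box a b) x * f x"
        using box_subset_cbox[of a b] by (cases "x \<in> box a b") (auto simp: indicator_def)
    qed
    finally show ?thesis .
  qed
  ultimately show ?thesis by simp
qed

lemma box_to_borel:
  fixes G :: "'a::euclidean_space \<Rightarrow> real"
  assumes G: "integrable lebesgue G"
    and bx0: "\<And>a b. integral\<^sup>L lebesgue (\<lambda>x. indicator (box a b) x * G x) = 0"
    and tot: "integral\<^sup>L lebesgue G = 0"
    and A: "A \<in> sets borel"
  shows "integral\<^sup>L lebesgue (\<lambda>x. indicator A x * G x) = 0"
proof -
  let ?G = "range (\<lambda>(a, b). box a b :: 'a set)"
  have sb: "sets borel = sigma_sets UNIV ?G"
    by (subst borel_eq_box) (simp add: sets_measure_of)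
  have inG: "box \<alpha> \<beta> \<in> ?G" for \<alpha> \<beta> :: 'a
    by (rule image_eqI[where x="(\<alpha>,\<beta>)"]) auto
  have ist: "Int_stable ?G"
    unfolding Int_stable_def
  proof (intro ballI)
    fix X Y assume "X \<in> ?G" "Y \<in> ?G"
    then obtain a b c d where "X = box a b" "Y = box c d" by auto
    then show "X \<inter> Y \<in> ?G" by (simp add: box_Int_box inG)
  qed
  from A have Ain: "A \<in> sigma_sets UNIV ?G" by (simp add: sb)
  show ?thesis
  proof (rule sigma_sets_induct_disjoint[OF ist _ Ain, where P="\<lambda>A. integral\<^sup>L lebesgue (\<lambda>x. indicator A x * G x) = 0"])
    show "?G \<subseteq> Pow UNIV" by auto
  next
    fix A assume "A \<in> ?G" then show "integral\<^sup>L lebesgue (\<lambda>x. indicator A x * G x) = 0" using bx0 by auto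
  next
    show "integral\<^sup>L lebesgue (\<lambda>x. indicator {} x * G x) = 0" by simp
  next
    fix A assume c1: "A \<in> sigma_sets UNIV ?G" and c2: "integral\<^sup>L lebesgue (\<lambda>x. indicator A x * G x) = 0"
    have Al: "A \<in> sets lebesgue" using c1 sb by simp
    have "integral\<^sup>L lebesgue (\<lambda>x. indicator (UNIV - A) x * G x)
        = integral\<^sup>L lebesgue (\<lambda>x. G x - indicator A x * G x)"
      by (rule Bochner_Integration.integral_cong) (auto simp: indicator_def)
    also have "\<dots> = integral\<^sup>L lebesgue G - integral\<^sup>L lebesgue (\<lambda>x. indicator A x * G x)"
      using G integrable_mult_indicator[OF Al G] by (intro Bochner_Integration.integral_diff) auto
    finally show "integral\<^sup>L lebesgue (\<lambda>x. indicator (UNIV - A) x * G x) = 0" using c2 tot by simp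
  next
    fix A :: "nat \<Rightarrow> 'a set" assume u1: "disjoint_family A" and u2: "range A \<subseteq> sigma_sets UNIV ?G"
      and u3: "\<And>i. integral\<^sup>L lebesgue (\<lambda>x. indicator (A i) x * G x) = 0"
    have "A i \<in> sets borel" for i using u2 by (auto simp: sb)
    then have Al: "A i \<in> sets lebesgue" for i by simp
    have "set_integrable lebesgue (\<Union>i. A i) G"
      unfolding set_integrable_def using Al G by (intro integrable_mult_indicator) auto
    then have "(LINT x:(\<Union>i. A i)|lebesgue. G x) = (\<Sum>i. (LINT x:(A i)|lebesgue. G x))"
      using u1 Al by (intro lebesgue_integral_countable_add) (auto simp: disjoint_family_on_def)
    then show "integral\<^sup>L lebesgue (\<lambda>x. indicator (\<Union>(range A)) x * G x) = 0"
      using u3 by (simp add: set_lebesgue_integral_def)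
  qed
qed

lemma borel_to_AE:
  fixes G :: "'a::euclidean_space \<Rightarrow> real"
  assumes G: "integrable (lebesgue::'a measure) G"
    and B: "\<And>A::'a set. A \<in> sets borel \<Longrightarrow> integral\<^sup>L (lebesgue::'a measure) (\<lambda>x. indicator A x * G x) = 0"
  shows "AE x in (lebesgue::'a measure). G x = 0"
proof -
  have "AE x in lebesgue. G x = 0"
  proof (rule density_unique_real[where f'="\<lambda>x::'a. 0", OF G])
  fix A :: "'a set" assume "A \<in> sets lebesgue"
  then obtain S N N' where SN: "A = S \<union> N" "N \<subseteq> N'" "N' \<in> null_sets lborel" "S \<in> sets lborel"
    by (rule sets_completionE)
  have Sl: "S \<in> sets lebesgue" using SN(4) by simp
  have "AE x in lebesgue. x \<notin> N'"
    using SN(3) by (intro AE_not_in null_sets_completionI)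
  then have "AE x in lebesgue. indicator A x *\<^sub>R G x = indicator S x * G x"
    by eventually_elim (use SN(1,2) in \<open>auto simp: indicator_def\<close>)
  moreover have "(\<lambda>x. indicator A x *\<^sub>R G x) \<in> borel_measurable lebesgue"
    using \<open>A \<in> sets lebesgue\<close> G by measurable
  moreover have "(\<lambda>x. indicator S x * G x) \<in> borel_measurable lebesgue"
    using Sl G by measurable
  ultimately have "integral\<^sup>L lebesgue (\<lambda>x. indicator A x *\<^sub>R G x) = integral\<^sup>L lebesgue (\<lambda>x. indicator S x * G x)"
    by (intro integral_cong_AE) auto
  also have "\<dots> = 0" using B SN(4) by simp
  finally show "set_lebesgue_integral lebesgue A G = set_lebesgue_integral lebesgue A (\<lambda>x::'a. 0)" by (simp add: set_lebesgue_integral_def)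
  qed simp
  then show ?thesis .
qed

lemma fundamental_lemma:
  fixes f :: "'a::euclidean_space \<Rightarrow> real"
  assumes "open \<Omega>" "locally_integrable_on \<Omega> f"
    and H: "\<And>\<psi> D\<psi>. C1c_grad \<Omega> \<psi> D\<psi> \<Longrightarrow> integral\<^sup>L (lebesgue_on \<Omega>) (\<lambda>x. f x * \<psi> x) = 0"
  shows "AE x in lebesgue_on \<Omega>. f x = 0"
proof -
  obtain \<D> where D: "countable \<D>" "\<D> \<subseteq> Pow \<Omega>" "\<And>X. X \<in> \<D> \<Longrightarrow> \<exists>a b. X = cbox a b" "\<Union>\<D> = \<Omega>"
    using open_countable_Union_open_cbox[OF assms(1)] by metis
  have loc: "AE x in lebesgue. x \<in> X \<longrightarrow> f x = 0" if X: "X \<in> \<D>" for X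
  proof -
    obtain c d where cd: "X = cbox c d" using D(3) X by blast
    have sub: "cbox c d \<subseteq> \<Omega>" using X D(2) cd by auto
    define G where "G = (\<lambda>x. indicator (box c d) x * f x)"
    have fC: "integrable (lebesgue_on (cbox c d)) f"
      using assms(2) sub unfolding locally_integrable_on_def by auto
    have cs: "cbox c d \<inter> space lebesgue \<in> sets lebesgue" by simp
    have "integrable lebesgue (\<lambda>x. indicator (cbox c d) x *\<^sub>R f x)"
      using iffD1[OF integrable_restrict_space[OF cs, of f] fC] .
    then have "integrable lebesgue (\<lambda>x. indicator (box c d) x *\<^sub>R (indicator (cbox c d) x *\<^sub>R f x))"
      using integrable_mult_indicator[of "box c d" lebesgue "\<lambda>x. indicator (cbox c d) x *\<^sub>R f x"] by simp
    moreover have "(\<lambda>x. indicator (box c d) x *\<^sub>R (indicator (cbox c d) x *\<^sub>R f x)) = G"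
    proof (rule ext)
      fix x show "indicator (box c d) x *\<^sub>R (indicator (cbox c d) x *\<^sub>R f x) = G x"
        using box_subset_cbox[of c d] by (cases "x \<in> box c d") (auto simp: G_def indicator_def)
    qed
    ultimately have Gi: "integrable lebesgue G" by simp
    have bx0: "integral\<^sup>L lebesgue (\<lambda>x. indicator (box a b) x * G x) = 0" for a b
    proof -
      define a' where "a' = (\<Sum>i\<in>Basis. max (a\<bullet>i) (c\<bullet>i) *\<^sub>R i)"
      define b' where "b' = (\<Sum>i\<in>Basis. min (b\<bullet>i) (d\<bullet>i) *\<^sub>R i)"
      have "(\<lambda>x. indicator (box a b) x * G x) = (\<lambda>x. indicator (box a' b') x * f x)"
        unfolding G_def a'_def b'_def box_Int_box[symmetric] by (auto simp: indicator_def)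
      moreover have "cbox a' b' \<subseteq> cbox c d"
        unfolding a'_def b'_def by (auto simp: mem_box)
      then have "integral\<^sup>L lebesgue (\<lambda>x. indicator (box a' b') x * f x) = 0"
        using sub by (intro box_int_zero[OF assms(1,2) H]) auto
      ultimately show ?thesis by simp
    qed
    have tot: "integral\<^sup>L lebesgue G = 0"
      unfolding G_def by (rule box_int_zero[OF assms(1,2) H sub])
    have "AE x in lebesgue. G x = 0"
      by (rule borel_to_AE[OF Gi box_to_borel[OF Gi bx0 tot]])
    moreover have "AE x in lebesgue. x \<notin> cbox c d - box c d"
      using negligible_frontier_interval[of c d] by (intro AE_not_in) (simp add: negligible_iff_null_sets)
    ultimately show ?thesis
      by eventually_elim (auto simp: G_def cd indicator_def)
  qed
  have "AE x in lebesgue. \<forall>X\<in>\<D>. x \<in> X \<longrightarrow> f x = 0"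
    using loc D(1) by (subst AE_ball_countable) auto
  then have "AE x in lebesgue. x \<in> \<Omega> \<longrightarrow> f x = 0"
    by eventually_elim (use D(4) in auto)
  then show ?thesis
    using open_leb[OF assms(1)] by (subst AE_restrict_space_iff) auto
qed

lemma LI_inner:
  fixes g :: "'a::euclidean_space \<Rightarrow> 'a"
  assumes "locally_integrable_on \<Omega> g"
  shows "locally_integrable_on \<Omega> (\<lambda>x. g x \<bullet> i)"
  using assms unfolding locally_integrable_on_def by auto

lemma LI_diff:
  fixes f g :: "'a::euclidean_space \<Rightarrow> real"
  assumes "locally_integrable_on \<Omega> f" "locally_integrable_on \<Omega> g"
  shows "locally_integrable_on \<Omega> (\<lambda>x. f x - g x)"
  using assms unfolding locally_integrable_on_def by auto

lemma wg_unique: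
  fixes u :: "'a::euclidean_space \<Rightarrow> real"
  assumes "open \<Omega>" "weak_gradient \<Omega> u g" "weak_gradient \<Omega> u g'"
  shows "AE x in lebesgue_on \<Omega>. g x = g' x"
proof -
  have lg: "locally_integrable_on \<Omega> g" and lg': "locally_integrable_on \<Omega> g'"
    using assms(2,3) unfolding weak_gradient_def by auto
  have comp: "AE x in lebesgue_on \<Omega>. (g x \<bullet> i) - (g' x \<bullet> i) = 0" if i: "i \<in> Basis" for i
  proof (rule fundamental_lemma[OF assms(1) LI_diff[OF LI_inner[OF lg] LI_inner[OF lg']]])
    fix \<psi> D\<psi> assume C: "C1c_grad \<Omega> \<psi> D\<psi>"
    have i1: "integrable (lebesgue_on \<Omega>) (\<lambda>x. (g x \<bullet> i) * \<psi> x)"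
      by (rule LI_mult_C1c[OF assms(1) LI_inner[OF lg] C])
    have i2: "integrable (lebesgue_on \<Omega>) (\<lambda>x. (g' x \<bullet> i) * \<psi> x)"
      by (rule LI_mult_C1c[OF assms(1) LI_inner[OF lg'] C])
    have e1: "integral\<^sup>L (lebesgue_on \<Omega>) (\<lambda>x. u x * (D\<psi> x \<bullet> i)) = - integral\<^sup>L (lebesgue_on \<Omega>) (\<lambda>x. (g x \<bullet> i) * \<psi> x)"
      using assms(2) C i unfolding weak_gradient_def by blast
    have e2: "integral\<^sup>L (lebesgue_on \<Omega>) (\<lambda>x. u x * (D\<psi> x \<bullet> i)) = - integral\<^sup>L (lebesgue_on \<Omega>) (\<lambda>x. (g' x \<bullet> i) * \<psi> x)"
      using assms(3) C i unfolding weak_gradient_def by blast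
    have "integral\<^sup>L (lebesgue_on \<Omega>) (\<lambda>x. ((g x \<bullet> i) - (g' x \<bullet> i)) * \<psi> x)
        = integral\<^sup>L (lebesgue_on \<Omega>) (\<lambda>x. (g x \<bullet> i) * \<psi> x - (g' x \<bullet> i) * \<psi> x)"
      by (simp add: left_diff_distrib)
    also have "\<dots> = integral\<^sup>L (lebesgue_on \<Omega>) (\<lambda>x. (g x \<bullet> i) * \<psi> x) - integral\<^sup>L (lebesgue_on \<Omega>) (\<lambda>x. (g' x \<bullet> i) * \<psi> x)"
      by (rule Bochner_Integration.integral_diff[OF i1 i2])
    also have "\<dots> = 0" using e1 e2 by simp
    finally show "integral\<^sup>L (lebesgue_on \<Omega>) (\<lambda>x. ((g x \<bullet> i) - (g' x \<bullet> i)) * \<psi> x) = 0" .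
  qed
  have "AE x in lebesgue_on \<Omega>. \<forall>i\<in>Basis. (g x \<bullet> i) - (g' x \<bullet> i) = 0"
    using comp by (subst AE_ball_countable) (auto intro: countable_finite)
  then show ?thesis
    by eventually_elim (auto intro: euclidean_eqI simp: inner_diff_left)
qed

lemma young_pw:
  fixes p t x y :: real
  assumes p: "1 < p" and t: "0 < t" and x: "0 \<le> x" and y: "0 \<le> y"
  shows "x powr (p-1) * y \<le> x powr p / ((p/(p-1)) * t powr (p/(p-1))) + t powr p * y powr p / p"
proof -
  define q where "q = p/(p-1)"
  have q1: "q > 1" using p by (simp add: q_def field_simps)
  have pq: "1/q + 1/p = 1" using p by (simp add: q_def field_simps)
  have "(x powr (p-1) / t) * (t*y) \<le> (x powr (p-1) / t) powr q / q + (t*y) powr p / p"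
    by (rule Youngs_inequality[OF q1 p pq]) (use x y t in auto)
  moreover have "(x powr (p-1) / t) * (t*y) = x powr (p-1) * y" using t by simp
  moreover have "(x powr (p-1) / t) powr q = x powr p / t powr q"
  proof -
    have "(x powr (p-1) / t) powr q = (x powr (p-1)) powr q / t powr q"
      using x t by (simp add: powr_divide)
    also have "(x powr (p-1)) powr q = x powr p"
      using p by (simp add: powr_powr q_def)
    finally show ?thesis .
  qed
  moreover have "(t*y) powr p = t powr p * y powr p" using t y by (simp add: powr_mult)
  ultimately show ?thesis by (simp add: q_def mult.commute)
qed

lemma inner_pow_bound:
  fixes w v :: "'a::euclidean_space" and p :: real
  shows "\<bar>norm w powr (p-2) * (w \<bullet> v)\<bar> \<le> norm w powr (p-1) * norm v"
proof (cases "w = 0")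
  case True then show ?thesis by simp
next
  case False
  then have nw: "norm w > 0" by simp
  have "\<bar>norm w powr (p-2) * (w \<bullet> v)\<bar> = norm w powr (p-2) * \<bar>w \<bullet> v\<bar>" by (simp add: abs_mult)
  also have "\<dots> \<le> norm w powr (p-2) * (norm w * norm v)"
    by (intro mult_left_mono Cauchy_Schwarz_ineq2) auto
  also have "\<dots> = (norm w powr (p-2) * norm w powr 1) * norm v" using nw by simp
  also have "norm w powr (p-2) * norm w powr 1 = norm w powr (p-1)"
    using powr_add[of "norm w" "p-2" 1] by simp
  finally show ?thesis by simp
qed

lemma powr_sum_le:
  fixes a b p :: real
  assumes "1 \<le> p" "0 \<le> a" "0 \<le> b"
  shows "(a + b) powr p \<le> 2 powr (p-1) * (a powr p + b powr p)"
proof -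
  have two: "1 \<le> 2 powr (p-1)" using assms(1) by (intro ge_one_powr_ge_zero) auto
  consider "a = 0" | "b = 0" | "a > 0" "b > 0" using assms by linarith
  then show ?thesis
  proof cases
    case 1
    then show ?thesis using two mult_right_mono[OF two, of "b powr p"] by simp
  next
    case 2
    then show ?thesis using two mult_right_mono[OF two, of "a powr p"] by simp
  next
    case 3
    have "((1 - 1/2) *\<^sub>R a + (1/2) *\<^sub>R b) powr p \<le> (1 - 1/2) * a powr p + (1/2) * b powr p"
      using convex_onD[OF powr_convex[OF assms(1)], of "1/2" a b] 3 by simp
    then have "((a + b)/2) powr p \<le> (a powr p + b powr p) / 2" by (simp add: field_simps)
    moreover have "((a + b)/2) powr p = (a + b) powr p / 2 powr p"
      using 3 by (simp add: powr_divide)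
    moreover have "2 powr p = 2 * 2 powr (p-1)"
      by (simp add: powr_diff)
    ultimately have "(a + b) powr p / (2 * 2 powr (p-1)) \<le> (a powr p + b powr p) / 2" by simp
    then show ?thesis by (simp add: divide_le_eq field_simps)
  qed
qed

lemma norm_diff_powr_le:
  fixes x y :: "'b::real_normed_vector" and p :: real
  assumes "1 \<le> p"
  shows "norm (x - y) powr p \<le> 2 powr (p-1) * (norm x powr p + norm y powr p)"
proof -
  have "norm (x - y) powr p \<le> (norm x + norm y) powr p"
    using assms by (intro powr_mono2) (auto simp: norm_triangle_ineq4)
  also have "\<dots> \<le> 2 powr (p-1) * (norm x powr p + norm y powr p)"
    using assms by (intro powr_sum_le) auto
  finally show ?thesis .
qed

lemma YB:
  fixes w v :: "'a::euclidean_space" and p t :: real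
  assumes "1 < p" "0 < t"
  shows "\<bar>norm w powr (p-2) * (w \<bullet> v)\<bar> \<le> norm w powr p / ((p/(p-1)) * t powr (p/(p-1))) + t powr p * norm v powr p / p"
  using inner_pow_bound[of w p v] young_pw[OF assms, of "norm w" "norm v"] by simp

lemma sabs_props:
  fixes a e :: real
  assumes "0 < e"
  shows "0 \<le> sqrt (a^2 + e^2) - e" "\<bar>(sqrt (a^2 + e^2) - e) - \<bar>a\<bar>\<bar> \<le> e" "\<bar>a / sqrt (a^2 + e^2)\<bar> \<le> 1"
    "0 < sqrt (a^2 + e^2)"
proof -
  have s1: "e \<le> sqrt (a^2 + e^2)"
    using real_sqrt_le_mono[of "e^2" "a^2 + e^2"] assms by simp
  have s2: "\<bar>a\<bar> \<le> sqrt (a^2 + e^2)"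
    using real_sqrt_le_mono[of "a^2" "a^2 + e^2"] by simp
  have s3: "sqrt (a^2 + e^2) \<le> \<bar>a\<bar> + e"
  proof -
    have "a^2 + e^2 \<le> (\<bar>a\<bar> + e)^2" using assms by (simp add: power2_eq_square algebra_simps)
    then have "sqrt (a^2 + e^2) \<le> sqrt ((\<bar>a\<bar> + e)^2)" by (rule real_sqrt_le_mono)
    also have "\<dots> = \<bar>a\<bar> + e" using assms by simp
    finally show ?thesis .
  qed
  show "0 \<le> sqrt (a^2 + e^2) - e" using s1 by simp
  show "\<bar>(sqrt (a^2 + e^2) - e) - \<bar>a\<bar>\<bar> \<le> e" using s1 s2 s3 by linarith
  show p: "0 < sqrt (a^2 + e^2)" using s1 assms by linarith
  show "\<bar>a / sqrt (a^2 + e^2)\<bar> \<le> 1" using s2 p by (simp add: abs_div divide_le_eq)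
qed

lemma sabs_C1c:
  assumes C: "C1c_grad \<Omega> \<psi> D\<psi>" and e: "0 < e"
  shows "C1c_grad \<Omega> (\<lambda>x. sqrt ((\<psi> x)^2 + e^2) - e) (\<lambda>x. (\<psi> x / sqrt ((\<psi> x)^2 + e^2)) *\<^sub>R D\<psi> x)"
proof -
  obtain K B where K: "compact K" "K \<subseteq> \<Omega>" "\<And>x. x \<notin> K \<Longrightarrow> \<psi> x = 0"
    "continuous_on UNIV \<psi>" "continuous_on UNIV D\<psi>" "\<And>x. (\<psi> has_derivative (\<lambda>h. D\<psi> x \<bullet> h)) (at x)"
    using C1c_facts[OF C] by metis
  have pos: "0 < (y::real)^2 + e^2" for y using e by (simp add: add_nonneg_pos)
  have fd: "((\<lambda>y. sqrt (y^2 + e^2)) has_real_derivative (y / sqrt (y^2 + e^2))) (at y)" for y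
  proof -
    have d1: "((\<lambda>y. y^2 + e^2) has_real_derivative (2*y)) (at y)"
      using DERIV_add[OF DERIV_pow[of 2 y] DERIV_const[of "e^2" "at y"]] by simp
    have "((\<lambda>y. sqrt (y^2 + e^2)) has_real_derivative (inverse (sqrt (y^2 + e^2)) / 2 * (2*y))) (at y)"
      by (rule DERIV_chain2[OF DERIV_real_sqrt[OF pos] d1])
    moreover have "inverse (sqrt (y^2 + e^2)) / 2 * (2*y) = y / sqrt (y^2 + e^2)"
      by (simp add: field_simps)
    ultimately show ?thesis by simp
  qed
  have der: "((\<lambda>x. sqrt ((\<psi> x)^2 + e^2) - e) has_derivative
      (\<lambda>h. ((\<psi> x / sqrt ((\<psi> x)^2 + e^2)) *\<^sub>R D\<psi> x) \<bullet> h)) (at x)" for x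
  proof -
    have "((\<lambda>x. sqrt ((\<psi> x)^2 + e^2)) has_derivative (\<lambda>h. (D\<psi> x \<bullet> h) * (\<psi> x / sqrt ((\<psi> x)^2 + e^2)))) (at x)"
      by (rule DERIV_compose_FDERIV[OF fd K(6)])
    then have "((\<lambda>x. sqrt ((\<psi> x)^2 + e^2) - e) has_derivative (\<lambda>h. (D\<psi> x \<bullet> h) * (\<psi> x / sqrt ((\<psi> x)^2 + e^2)) - 0)) (at x)"
      by (intro has_derivative_diff has_derivative_const)
    moreover have "(\<lambda>h. (D\<psi> x \<bullet> h) * (\<psi> x / sqrt ((\<psi> x)^2 + e^2)) - 0) = (\<lambda>h. ((\<psi> x / sqrt ((\<psi> x)^2 + e^2)) *\<^sub>R D\<psi> x) \<bullet> h)"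
      by (simp add: mult.commute)
    ultimately show ?thesis by simp
  qed
  have cont: "continuous_on UNIV (\<lambda>x. (\<psi> x / sqrt ((\<psi> x)^2 + e^2)) *\<^sub>R D\<psi> x)"
    using K(4,5) pos by (intro continuous_intros) (auto simp: less_imp_neq[symmetric])
  show ?thesis unfolding C1c_grad_def
  proof (intro conjI allI exI[of _ K] impI der cont)
    show "x \<notin> K \<Longrightarrow> sqrt ((\<psi> x)^2 + e^2) - e = 0" for x using K(3)[of x] e by simp
  qed (use K in auto)
qed

lemma fast_subseq:
  fixes a :: "nat \<Rightarrow> real"
  assumes "a \<longlonglongrightarrow> 0"
  shows "\<exists>r. strict_mono r \<and> (\<forall>k. \<bar>a (r k)\<bar> < (1/2)^k)"
proof -
  have "\<exists>N. \<forall>j\<ge>N. \<bar>a j\<bar> < (1/2)^k" for k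
  proof -
    have "(0::real) < (1/2)^k" by simp
    then show ?thesis using assms unfolding LIMSEQ_def dist_real_def by auto
  qed
  then obtain N where N: "\<And>k j. j \<ge> N k \<Longrightarrow> \<bar>a j\<bar> < (1/2)^k" by metis
  define r where "r k = (\<Sum>i\<le>k. N i) + k" for k
  have "strict_mono r"
    unfolding strict_mono_Suc_iff r_def by simp
  moreover have "r k \<ge> N k" for k
  proof -
    have "N k \<le> (\<Sum>i\<le>k. N i)" by (rule member_le_sum) auto
    then show ?thesis unfolding r_def by simp
  qed
  ultimately show ?thesis using N by blast
qed

lemma ae_subseq:
  fixes d :: "nat \<Rightarrow> 'a \<Rightarrow> real"
  assumes int: "\<And>j. integrable M (\<lambda>x. \<bar>d j x\<bar> powr p)" and meas: "\<And>j. d j \<in> borel_measurable M"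
    and p: "0 < p"
    and lim: "(\<lambda>j. integral\<^sup>L M (\<lambda>x. \<bar>d j x\<bar> powr p)) \<longlonglongrightarrow> 0"
  shows "\<exists>r. strict_mono r \<and> (AE x in M. (\<lambda>k. d (r k) x) \<longlonglongrightarrow> 0)"
proof -
  obtain r where r: "strict_mono r" "\<And>k. \<bar>integral\<^sup>L M (\<lambda>x. \<bar>d (r k) x\<bar> powr p)\<bar> < (1/2)^k"
    using fast_subseq[OF lim] by blast
  let ?f = "\<lambda>k x. ennreal (\<bar>d (r k) x\<bar> powr p)"
  have fm: "?f k \<in> borel_measurable M" for k using meas by measurable
  have nn: "integral\<^sup>N M (?f k) = ennreal (integral\<^sup>L M (\<lambda>x. \<bar>d (r k) x\<bar> powr p))" for k
    by (rule nn_integral_eq_integral[OF int]) auto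
  have "(\<integral>\<^sup>+ x. (\<Sum>k. ?f k x) \<partial>M) = (\<Sum>k. integral\<^sup>N M (?f k))"
    by (rule nn_integral_suminf[OF fm])
  also have "\<dots> \<le> (\<Sum>k. ennreal ((1/2)^k))"
  proof (rule suminf_le)
    show "integral\<^sup>N M (?f k) \<le> ennreal ((1/2)^k)" for k
      using r(2)[of k] unfolding nn by (intro ennreal_leI) auto
  qed auto
  also have "\<dots> < top"
  proof -
    have "(\<Sum>k. ennreal ((1/2::real)^k)) \<noteq> top"
      by (rule ennreal_suminf_neq_top) auto
    then show ?thesis by (simp add: less_top)
  qed
  finally have "(\<integral>\<^sup>+ x. (\<Sum>k. ?f k x) \<partial>M) \<noteq> \<infinity>" by (simp add: less_top)
  then have "AE x in M. (\<Sum>k. ?f k x) \<noteq> \<infinity>"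
    by (intro nn_integral_PInf_AE) (use fm in auto)
  then have "AE x in M. (\<lambda>k. d (r k) x) \<longlonglongrightarrow> 0"
  proof eventually_elim
    case (elim x)
    then have "summable (\<lambda>k. \<bar>d (r k) x\<bar> powr p)"
      by (intro summable_suminf_not_top) (simp_all add: top_ennreal_def)
    then have "(\<lambda>k. \<bar>d (r k) x\<bar> powr p) \<longlonglongrightarrow> 0" by (rule summable_LIMSEQ_zero)
    then have "(\<lambda>k. (\<bar>d (r k) x\<bar> powr p) powr (1/p)) \<longlonglongrightarrow> 0"
      by (rule tendsto_zero_powrI[OF _ tendsto_const]) (use p in auto)
    then have "(\<lambda>k. \<bar>d (r k) x\<bar>) \<longlonglongrightarrow> 0"
      using p by (simp add: powr_powr)
    then show ?case by (simp add: tendsto_rabs_zero_iff)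
  qed
  then show ?thesis using r(1) by blast
qed

lemma fin_leb: "open \<Omega> \<Longrightarrow> bounded \<Omega> \<Longrightarrow> finite_measure (lebesgue_on \<Omega>)"
  by (intro finite_measure_lebesgue_on bounded_set_imp_lmeasurable open_leb)

lemma C1c_Lp:
  fixes \<psi> :: "'a::euclidean_space \<Rightarrow> real"
  assumes "open \<Omega>" "bounded \<Omega>" "C1c_grad \<Omega> \<psi> D\<psi>" "0 \<le> p"
  shows "\<psi> \<in> borel_measurable (lebesgue_on \<Omega>)" "D\<psi> \<in> borel_measurable (lebesgue_on \<Omega>)"
    "integrable (lebesgue_on \<Omega>) (\<lambda>x. \<bar>\<psi> x\<bar> powr p)" "integrable (lebesgue_on \<Omega>) (\<lambda>x. norm (D\<psi> x) powr p)"
proof -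
  obtain K B where K: "continuous_on UNIV \<psi>" "continuous_on UNIV D\<psi>" "\<And>x. \<bar>\<psi> x\<bar> \<le> B" "\<And>x. norm (D\<psi> x) \<le> B"
    using C1c_facts[OF assms(3)] by metis
  interpret finite_measure "lebesgue_on \<Omega>" by (rule fin_leb[OF assms(1,2)])
  show m1: "\<psi> \<in> borel_measurable (lebesgue_on \<Omega>)" by (rule cont_meas[OF K(1) open_leb[OF assms(1)]])
  show m2: "D\<psi> \<in> borel_measurable (lebesgue_on \<Omega>)" by (rule cont_meas[OF K(2) open_leb[OF assms(1)]])
  show "integrable (lebesgue_on \<Omega>) (\<lambda>x. \<bar>\<psi> x\<bar> powr p)"
  proof (rule integrable_const_bound[where B="B powr p"])
    show "AE x in lebesgue_on \<Omega>. norm (\<bar>\<psi> x\<bar> powr p) \<le> B powr p"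
      using K(3) assms(4) by (intro AE_I2) (simp add: powr_mono2)
  qed (use m1 in measurable)
  show "integrable (lebesgue_on \<Omega>) (\<lambda>x. norm (D\<psi> x) powr p)"
  proof (rule integrable_const_bound[where B="B powr p"])
    show "AE x in lebesgue_on \<Omega>. norm (norm (D\<psi> x) powr p) \<le> B powr p"
      using K(4) assms(4) by (intro AE_I2) (simp add: powr_mono2)
  qed (use m2 in measurable)
qed

lemma Lp_diff:
  fixes a b :: "'a \<Rightarrow> 'b::{banach,second_countable_topology}"
  assumes "1 \<le> p" "a \<in> borel_measurable M" "b \<in> borel_measurable M"
    "integrable M (\<lambda>x. norm (a x) powr p)" "integrable M (\<lambda>x. norm (b x) powr p)"
  shows "integrable M (\<lambda>x. norm (a x - b x) powr p)"
proof (rule Bochner_Integration.integrable_bound)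
  show "integrable M (\<lambda>x. 2 powr (p-1) * (norm (a x) powr p + norm (b x) powr p))"
    using assms(4,5) by simp
  show "(\<lambda>x. norm (a x - b x) powr p) \<in> borel_measurable M" using assms(2,3) by measurable
  show "AE x in M. norm (norm (a x - b x) powr p) \<le> norm (2 powr (p-1) * (norm (a x) powr p + norm (b x) powr p))"
    using norm_diff_powr_le[OF assms(1)] by (intro AE_I2) (simp add: add_nonneg_nonneg)
qed

lemma young_int:
  fixes g0 v :: "'a \<Rightarrow> 'b::euclidean_space"
  assumes p: "1 < p" and t: "0 < t"
    and gm: "g0 \<in> borel_measurable M" and gi: "integrable M (\<lambda>x. norm (g0 x) powr p)"
    and vm: "v \<in> borel_measurable M" and vi: "integrable M (\<lambda>x. norm (v x) powr p)"
  shows "integrable M (\<lambda>x. norm (g0 x) powr (p-2) * (g0 x \<bullet> v x))"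
    "\<bar>integral\<^sup>L M (\<lambda>x. norm (g0 x) powr (p-2) * (g0 x \<bullet> v x))\<bar>
      \<le> integral\<^sup>L M (\<lambda>x. norm (g0 x) powr p) / ((p/(p-1)) * t powr (p/(p-1)))
         + t powr p / p * integral\<^sup>L M (\<lambda>x. norm (v x) powr p)"
proof -
  let ?c = "(p/(p-1)) * t powr (p/(p-1))"
  let ?Y = "\<lambda>x. norm (g0 x) powr p / ?c + t powr p * norm (v x) powr p / p"
  have Yi: "integrable M ?Y" using gi vi by simp
  have c0: "0 < ?c" using p t by simp
  have Y0: "0 \<le> ?Y x" for x using c0 p by (simp add: add_nonneg_nonneg)
  have hm: "(\<lambda>x. norm (g0 x) powr (p-2) * (g0 x \<bullet> v x)) \<in> borel_measurable M"
    using gm vm by measurable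
  have bd: "\<bar>norm (g0 x) powr (p-2) * (g0 x \<bullet> v x)\<bar> \<le> ?Y x" for x
    using YB[OF p t, of "g0 x" "v x"] by simp
  show hi: "integrable M (\<lambda>x. norm (g0 x) powr (p-2) * (g0 x \<bullet> v x))"
    by (rule Bochner_Integration.integrable_bound[OF Yi hm]) (use bd Y0 in \<open>auto intro!: AE_I2 simp: abs_of_nonneg\<close>)
  have "\<bar>integral\<^sup>L M (\<lambda>x. norm (g0 x) powr (p-2) * (g0 x \<bullet> v x))\<bar>
      \<le> integral\<^sup>L M (\<lambda>x. \<bar>norm (g0 x) powr (p-2) * (g0 x \<bullet> v x)\<bar>)"
    by (rule integral_abs_bound)
  also have "\<dots> \<le> integral\<^sup>L M ?Y"
    by (rule integral_mono[OF _ Yi bd]) (use hi in simp)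
  also have "integral\<^sup>L M ?Y = integral\<^sup>L M (\<lambda>x. norm (g0 x) powr p) / ?c
      + t powr p / p * integral\<^sup>L M (\<lambda>x. norm (v x) powr p)"
    using gi vi by (simp add: Bochner_Integration.integral_add)
  finally show "\<bar>integral\<^sup>L M (\<lambda>x. norm (g0 x) powr (p-2) * (g0 x \<bullet> v x))\<bar>
      \<le> integral\<^sup>L M (\<lambda>x. norm (g0 x) powr p) / ((p/(p-1)) * t powr (p/(p-1)))
         + t powr p / p * integral\<^sup>L M (\<lambda>x. norm (v x) powr p)" .
qed

lemma main_bound:
  fixes f :: "'a::euclidean_space \<Rightarrow> real" and g0 H :: "'a \<Rightarrow> 'a"
    and \<psi>s :: "nat \<Rightarrow> 'a \<Rightarrow> real" and D\<psi>s :: "nat \<Rightarrow> 'a \<Rightarrow> 'a"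
  assumes \<Omega>: "open \<Omega>" "bounded \<Omega>" and p: "1 < p"
    and fm: "f \<in> borel_measurable (lebesgue_on \<Omega>)" and fnn: "AE x in lebesgue_on \<Omega>. 0 \<le> f x"
    and eq: "\<And>\<phi> D\<phi>. C1c_grad \<Omega> \<phi> D\<phi> \<Longrightarrow> integrable (lebesgue_on \<Omega>) (\<lambda>x. f x * \<phi> x) \<and>
       integral\<^sup>L (lebesgue_on \<Omega>) (\<lambda>x. f x * \<phi> x) = integral\<^sup>L (lebesgue_on \<Omega>) (\<lambda>x. norm (g0 x) powr (p-2) * (g0 x \<bullet> D\<phi> x))"
    and gm: "g0 \<in> borel_measurable (lebesgue_on \<Omega>)" and gi: "integrable (lebesgue_on \<Omega>) (\<lambda>x. norm (g0 x) powr p)"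
    and C: "\<And>j. C1c_grad \<Omega> (\<psi>s j) (D\<psi>s j)"
    and \<psi>m: "\<psi> \<in> borel_measurable (lebesgue_on \<Omega>)" and \<psi>i: "integrable (lebesgue_on \<Omega>) (\<lambda>x. \<bar>\<psi> x\<bar> powr p)"
    and Hm: "H \<in> borel_measurable (lebesgue_on \<Omega>)" and Hi: "integrable (lebesgue_on \<Omega>) (\<lambda>x. norm (H x) powr p)"
    and c1: "(\<lambda>j. integral\<^sup>L (lebesgue_on \<Omega>) (\<lambda>x. \<bar>\<psi>s j x - \<psi> x\<bar> powr p)) \<longlonglongrightarrow> 0"
    and c2: "(\<lambda>j. integral\<^sup>L (lebesgue_on \<Omega>) (\<lambda>x. norm (D\<psi>s j x - H x) powr p)) \<longlonglongrightarrow> 0"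
  shows "integrable (lebesgue_on \<Omega>) (\<lambda>x. f x * \<bar>\<psi> x\<bar>)"
    "\<And>t. 0 < t \<Longrightarrow> integral\<^sup>L (lebesgue_on \<Omega>) (\<lambda>x. f x * \<bar>\<psi> x\<bar>)
       \<le> integral\<^sup>L (lebesgue_on \<Omega>) (\<lambda>x. norm (g0 x) powr p) / ((p/(p-1)) * t powr (p/(p-1)))
         + t powr p / p * (2 powr (p-1) * integral\<^sup>L (lebesgue_on \<Omega>) (\<lambda>x. norm (H x) powr p))"
proof -
  let ?M = "lebesgue_on \<Omega>"
  let ?A = "integral\<^sup>L ?M (\<lambda>x. norm (g0 x) powr p)"
  let ?c = "\<lambda>t::real. (p/(p-1)) * t powr (p/(p-1))"
  let ?NH = "integral\<^sup>L ?M (\<lambda>x. norm (H x) powr p)"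
  have p0: "0 \<le> p" "1 \<le> p" using p by auto
  note CL = C1c_Lp[OF \<Omega> C p0(1)]
  have dint: "integrable ?M (\<lambda>x. \<bar>\<psi>s j x - \<psi> x\<bar> powr p)" for j
    using Lp_diff[OF p0(2) CL(1)[of j] \<psi>m] CL(3)[of j] \<psi>i by simp
  obtain r where r: "strict_mono r" "AE x in ?M. (\<lambda>k. \<psi>s (r k) x - \<psi> x) \<longlonglongrightarrow> 0"
    using ae_subseq[where d="\<lambda>j x. \<psi>s j x - \<psi> x", OF dint _ _ c1] CL(1) \<psi>m p by auto
  define e where "e k = 1 / (real k + 1)" for k
  have e0: "0 < e k" for k by (simp add: e_def)
  have eeq: "e = (\<lambda>k. inverse (real (Suc k)))" by (auto simp: e_def fun_eq_iff inverse_eq_divide add.commute)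
  have elim0: "e \<longlonglongrightarrow> 0" unfolding eeq by (rule LIMSEQ_inverse_real_of_nat)
  define \<theta> where "\<theta> k x = sqrt ((\<psi>s (r k) x)^2 + (e k)^2) - e k" for k x
  define D\<theta> where "D\<theta> k x = (\<psi>s (r k) x / sqrt ((\<psi>s (r k) x)^2 + (e k)^2)) *\<^sub>R D\<psi>s (r k) x" for k x
  have C\<theta>: "C1c_grad \<Omega> (\<theta> k) (D\<theta> k)" for k
    unfolding \<theta>_def[abs_def] D\<theta>_def[abs_def] by (rule sabs_C1c[OF C e0])
  note C\<theta>L = C1c_Lp[OF \<Omega> C\<theta> p0(1)]
  have \<theta>0: "0 \<le> \<theta> k x" for k x unfolding \<theta>_def using sabs_props(1)[OF e0] by simp
  have \<theta>lim: "AE x in ?M. (\<lambda>k. \<theta> k x) \<longlonglongrightarrow> \<bar>\<psi> x\<bar>"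
    using r(2)
  proof eventually_elim
    case (elim x)
    have "(\<lambda>k. e k + \<bar>\<psi>s (r k) x - \<psi> x\<bar>) \<longlonglongrightarrow> 0 + 0"
      using elim0 elim by (intro tendsto_add tendsto_rabs_zero)
    moreover have "\<bar>\<theta> k x - \<bar>\<psi> x\<bar>\<bar> \<le> e k + \<bar>\<psi>s (r k) x - \<psi> x\<bar>" for k
      using sabs_props(2)[OF e0, of "\<psi>s (r k) x" k] unfolding \<theta>_def by linarith
    ultimately have "(\<lambda>k. \<theta> k x - \<bar>\<psi> x\<bar>) \<longlonglongrightarrow> 0"
      using Lim_null_comparison[of "\<lambda>k. \<theta> k x - \<bar>\<psi> x\<bar>" "\<lambda>k. e k + \<bar>\<psi>s (r k) x - \<psi> x\<bar>" sequentially]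
      by (simp add: always_eventually)
    then show ?case by (simp add: LIM_zero_iff)
  qed
  have D\<theta>le: "norm (D\<theta> k x) \<le> norm (D\<psi>s (r k) x)" for k x
  proof -
    have "norm (D\<theta> k x) = \<bar>\<psi>s (r k) x / sqrt ((\<psi>s (r k) x)^2 + (e k)^2)\<bar> * norm (D\<psi>s (r k) x)"
      unfolding D\<theta>_def by simp
    also have "\<dots> \<le> 1 * norm (D\<psi>s (r k) x)"
      using sabs_props(3)[OF e0] by (intro mult_right_mono) auto
    finally show ?thesis by simp
  qed
  define b where "b t k = ?A / ?c t + t powr p / p * (2 powr (p-1) *
      (integral\<^sup>L ?M (\<lambda>x. norm (D\<psi>s (r k) x - H x) powr p) + ?NH))" for t k
  have key: "integral\<^sup>L ?M (\<lambda>x. f x * \<theta> k x) \<le> b t k" if t: "0 < t" for t k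
  proof -
    have DHi: "integrable ?M (\<lambda>x. norm (D\<psi>s (r k) x - H x) powr p)"
      by (rule Lp_diff[OF p0(2) CL(2) Hm CL(4) Hi])
    have s1: "integral\<^sup>L ?M (\<lambda>x. f x * \<theta> k x) \<le> ?A / ?c t + t powr p / p * integral\<^sup>L ?M (\<lambda>x. norm (D\<theta> k x) powr p)"
    proof -
      have "integral\<^sup>L ?M (\<lambda>x. f x * \<theta> k x) = integral\<^sup>L ?M (\<lambda>x. norm (g0 x) powr (p-2) * (g0 x \<bullet> D\<theta> k x))"
        using eq[OF C\<theta>] by blast
      also have "\<dots> \<le> \<bar>\<dots>\<bar>" by simp
      also have "\<dots> \<le> ?A / ?c t + t powr p / p * integral\<^sup>L ?M (\<lambda>x. norm (D\<theta> k x) powr p)"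
        by (rule young_int(2)[OF p t gm gi C\<theta>L(2) C\<theta>L(4)])
      finally show ?thesis .
    qed
    have s2: "integral\<^sup>L ?M (\<lambda>x. norm (D\<theta> k x) powr p) \<le> integral\<^sup>L ?M (\<lambda>x. norm (D\<psi>s (r k) x) powr p)"
      by (rule integral_mono[OF C\<theta>L(4) CL(4)]) (use D\<theta>le p0 in \<open>auto intro: powr_mono2\<close>)
    have s3: "integral\<^sup>L ?M (\<lambda>x. norm (D\<psi>s (r k) x) powr p)
        \<le> 2 powr (p-1) * (integral\<^sup>L ?M (\<lambda>x. norm (D\<psi>s (r k) x - H x) powr p) + ?NH)"
    proof -
      have "integral\<^sup>L ?M (\<lambda>x. norm (D\<psi>s (r k) x) powr p)
          \<le> integral\<^sup>L ?M (\<lambda>x. 2 powr (p-1) * (norm (D\<psi>s (r k) x - H x) powr p + norm (- H x) powr p))"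
      proof (rule integral_mono[OF CL(4)])
        show "integrable ?M (\<lambda>x. 2 powr (p-1) * (norm (D\<psi>s (r k) x - H x) powr p + norm (- H x) powr p))"
          using DHi Hi by simp
        show "norm (D\<psi>s (r k) x) powr p \<le> 2 powr (p-1) * (norm (D\<psi>s (r k) x - H x) powr p + norm (- H x) powr p)" for x
          using norm_diff_powr_le[OF p0(2), of "D\<psi>s (r k) x - H x" "- H x"] by simp
      qed
      also have "\<dots> = 2 powr (p-1) * (integral\<^sup>L ?M (\<lambda>x. norm (D\<psi>s (r k) x - H x) powr p) + ?NH)"
        using DHi Hi by (simp add: Bochner_Integration.integral_add)
      finally show ?thesis .
    qed
    have tp: "0 \<le> t powr p / p" using p by simp
    have "t powr p / p * integral\<^sup>L ?M (\<lambda>x. norm (D\<theta> k x) powr p)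
        \<le> t powr p / p * (2 powr (p-1) * (integral\<^sup>L ?M (\<lambda>x. norm (D\<psi>s (r k) x - H x) powr p) + ?NH))"
      using s2 s3 tp by (intro mult_left_mono) auto
    then show ?thesis using s1 unfolding b_def by linarith
  qed
  have blim: "(\<lambda>k. b t k) \<longlonglongrightarrow> ?A / ?c t + t powr p / p * (2 powr (p-1) * (0 + ?NH))" for t
  proof -
    have "(\<lambda>k. integral\<^sup>L ?M (\<lambda>x. norm (D\<psi>s (r k) x - H x) powr p)) \<longlonglongrightarrow> 0"
      using LIMSEQ_subseq_LIMSEQ[OF c2 r(1)] by (simp add: comp_def)
    then show ?thesis unfolding b_def by (intro tendsto_intros)
  qed
  have fatou: "(\<integral>\<^sup>+ x. ennreal (f x * \<bar>\<psi> x\<bar>) \<partial>?M)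
      \<le> ennreal (?A / ?c t + t powr p / p * (2 powr (p-1) * ?NH))" if t: "0 < t" for t
  proof -
    let ?u = "\<lambda>k x. ennreal (f x * \<theta> k x)"
    have um: "?u k \<in> borel_measurable ?M" for k using fm C\<theta>L(1)[of k] by measurable
    have "AE x in ?M. ennreal (f x * \<bar>\<psi> x\<bar>) = liminf (\<lambda>k. ?u k x)"
      using \<theta>lim
    proof eventually_elim
      case (elim x)
      have "(\<lambda>k. ?u k x) \<longlonglongrightarrow> ennreal (f x * \<bar>\<psi> x\<bar>)"
        by (intro tendsto_ennrealI tendsto_mult tendsto_const elim)
      then show ?case by (simp add: lim_imp_Liminf)
    qed
    then have "(\<integral>\<^sup>+ x. ennreal (f x * \<bar>\<psi> x\<bar>) \<partial>?M) = (\<integral>\<^sup>+ x. liminf (\<lambda>k. ?u k x) \<partial>?M)"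
      by (rule nn_integral_cong_AE)
    also have "\<dots> \<le> liminf (\<lambda>k. integral\<^sup>N ?M (?u k))"
      by (rule nn_integral_liminf[OF um])
    also have "\<dots> \<le> liminf (\<lambda>k. ennreal (b t k))"
    proof (rule Liminf_mono[OF always_eventually], intro allI)
      fix k
      have fi: "integrable ?M (\<lambda>x. f x * \<theta> k x)" using eq[OF C\<theta>] by blast
      have "integral\<^sup>N ?M (?u k) = ennreal (integral\<^sup>L ?M (\<lambda>x. f x * \<theta> k x))"
        using fnn by (intro nn_integral_eq_integral[OF fi]) (auto elim!: eventually_mono simp: \<theta>0)
      also have "\<dots> \<le> ennreal (b t k)" using key[OF t] by (rule ennreal_leI)
      finally show "integral\<^sup>N ?M (?u k) \<le> ennreal (b t k)" .
    qed
    also have "liminf (\<lambda>k. ennreal (b t k)) = ennreal (?A / ?c t + t powr p / p * (2 powr (p-1) * ?NH))"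
      using blim[of t] by (intro lim_imp_Liminf tendsto_ennrealI) auto
    finally show ?thesis .
  qed
  have fpm: "(\<lambda>x. f x * \<bar>\<psi> x\<bar>) \<in> borel_measurable ?M" using fm \<psi>m by measurable
  have fpnn: "AE x in ?M. 0 \<le> f x * \<bar>\<psi> x\<bar>" using fnn by eventually_elim simp
  show fpi: "integrable ?M (\<lambda>x. f x * \<bar>\<psi> x\<bar>)"
    by (rule integrableI_nonneg[OF fpm fpnn]) (use fatou[of 1] in \<open>simp add: order_le_less_trans\<close>)
  fix t :: real assume t: "0 < t"
  have "ennreal (integral\<^sup>L ?M (\<lambda>x. f x * \<bar>\<psi> x\<bar>)) = (\<integral>\<^sup>+ x. ennreal (f x * \<bar>\<psi> x\<bar>) \<partial>?M)"
    by (rule nn_integral_eq_integral[OF fpi fpnn, symmetric])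
  also have "\<dots> \<le> ennreal (?A / ?c t + t powr p / p * (2 powr (p-1) * ?NH))" by (rule fatou[OF t])
  finally have le: "ennreal (integral\<^sup>L ?M (\<lambda>x. f x * \<bar>\<psi> x\<bar>)) \<le> ennreal (?A / ?c t + t powr p / p * (2 powr (p-1) * ?NH))" .
  have "0 \<le> ?A / ?c t + t powr p / p * (2 powr (p-1) * ?NH)"
    using p t by (intro add_nonneg_nonneg mult_nonneg_nonneg divide_nonneg_nonneg integral_nonneg_AE) auto
  then show "integral\<^sup>L ?M (\<lambda>x. f x * \<bar>\<psi> x\<bar>) \<le> ?A / ?c t + t powr p / p * (2 powr (p-1) * ?NH)"
    using le by (simp add: ennreal_le_iff)
qed

lemma C1c_diff:
  assumes "C1c_grad \<Omega> \<phi>1 D1" "C1c_grad \<Omega> \<phi>2 D2"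
  shows "C1c_grad \<Omega> (\<lambda>x. \<phi>1 x - \<phi>2 x) (\<lambda>x. D1 x - D2 x)"
proof -
  obtain K1 where K1: "compact K1" "K1 \<subseteq> \<Omega>" "\<And>x. x \<notin> K1 \<Longrightarrow> \<phi>1 x = 0"
    "continuous_on UNIV D1" "\<And>x. (\<phi>1 has_derivative (\<lambda>h. D1 x \<bullet> h)) (at x)"
    using C1c_facts[OF assms(1)] by metis
  obtain K2 where K2: "compact K2" "K2 \<subseteq> \<Omega>" "\<And>x. x \<notin> K2 \<Longrightarrow> \<phi>2 x = 0"
    "continuous_on UNIV D2" "\<And>x. (\<phi>2 has_derivative (\<lambda>h. D2 x \<bullet> h)) (at x)"
    using C1c_facts[OF assms(2)] by metis
  have der: "((\<lambda>x. \<phi>1 x - \<phi>2 x) has_derivative (\<lambda>h. (D1 x - D2 x) \<bullet> h)) (at x)" for x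
    using has_derivative_diff[OF K1(5)[of x] K2(5)[of x]] by (simp add: inner_diff_left)
  show ?thesis unfolding C1c_grad_def
  proof (intro conjI allI exI[of _ "K1 \<union> K2"] impI der)
    show "continuous_on UNIV (\<lambda>x. D1 x - D2 x)" using K1(4) K2(4) by (intro continuous_intros)
    show "x \<notin> K1 \<union> K2 \<Longrightarrow> \<phi>1 x - \<phi>2 x = 0" for x using K1(3) K2(3) by auto
  qed (use K1 K2 in auto)
qed

lemma eps_tend:
  fixes a b :: "nat \<Rightarrow> real"
  assumes bound: "\<And>t k. 0 < t \<Longrightarrow> \<bar>a k\<bar> \<le> C / ((p/(p-1)) * t powr (p/(p-1))) + t powr p * D * b k"
    and b: "b \<longlonglongrightarrow> 0" and p: "1 < p" and C: "0 \<le> C"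
  shows "a \<longlonglongrightarrow> 0"
proof (rule LIMSEQ_I)
  fix \<epsilon> :: real assume \<epsilon>: "0 < \<epsilon>"
  define q where "q = p/(p-1)"
  have q1: "1 \<le> q" using p by (simp add: q_def field_simps)
  define t where "t = 2 * C / (q * \<epsilon>) + 1"
  have t1: "1 \<le> t" using C q1 \<epsilon> by (simp add: t_def)
  have "t \<le> t powr q" using powr_mono[OF q1 t1] t1 by simp
  then have "q * t \<le> q * t powr q" using q1 by simp
  moreover have "2 * C / \<epsilon> < q * t"
    using q1 \<epsilon> C by (simp add: t_def field_simps)
  ultimately have lt: "2 * C / \<epsilon> < q * t powr q" by linarith
  have qt0: "0 < q * t powr q" using q1 t1 by simp
  have c1: "C / (q * t powr q) < \<epsilon> / 2"
    using lt qt0 \<epsilon> by (simp add: divide_less_eq field_simps)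
  have "(\<lambda>k. t powr p * D * b k) \<longlonglongrightarrow> t powr p * D * 0"
    by (intro tendsto_mult tendsto_const b)
  then obtain N where N: "\<And>k. k \<ge> N \<Longrightarrow> \<bar>t powr p * D * b k\<bar> < \<epsilon> / 2"
    using \<epsilon> unfolding LIMSEQ_def dist_real_def by (metis half_gt_zero diff_zero mult_zero_right)
  show "\<exists>no. \<forall>n\<ge>no. norm (a n - 0) < \<epsilon>"
  proof (intro exI allI impI)
    fix k assume "N \<le> k"
    have "\<bar>a k\<bar> \<le> C / (q * t powr q) + t powr p * D * b k"
      using bound[of t k] t1 by (simp add: q_def)
    then have "\<bar>a k\<bar> < \<epsilon>/2 + \<epsilon>/2" using N[OF \<open>N \<le> k\<close>] c1 abs_ge_self[of "t powr p * D * b k"] by linarith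
    then show "norm (a k - 0) < \<epsilon>" by simp
  qed
qed

theorem mainTheorem3:
  fixes \<Omega> :: "'a::euclidean_space set" and p :: real
    and F :: "'a \<Rightarrow> real \<Rightarrow> real" and u :: "'a \<Rightarrow> real"
  assumes "open \<Omega>" and "bounded \<Omega>"
    and "1 < p" and "p < real DIM('a)"
    and "caratheodory_nonneg \<Omega> F"
    and "weak_solution p \<Omega> F u"
  shows "(\<forall>phi\<in>W01p p \<Omega>. (AE x in lebesgue_on \<Omega>. phi x \<ge> 0) \<longrightarrow>
            integrable (lebesgue_on \<Omega>) (\<lambda>x. F x (u x) * phi x))
       \<and> (\<forall>phi\<in>W01p p \<Omega>.
            integrable (lebesgue_on \<Omega>) (\<lambda>x. F x (u x) * phi x) \<and>
            (\<forall>g h. weak_gradient \<Omega> u g \<longrightarrow> weak_gradient \<Omega> phi h \<longrightarrow>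
               integral\<^sup>L (lebesgue_on \<Omega>) (\<lambda>x. norm (g x) powr (p - 2) * (g x \<bullet> h x))
               = integral\<^sup>L (lebesgue_on \<Omega>) (\<lambda>x. F x (u x) * phi x)))"
proof -
  note \<Omega> = assms(1,2)
  have p: "1 < p" by fact
  have p0: "0 \<le> p" "1 \<le> p" using p by auto
  let ?M = "lebesgue_on \<Omega>"
  define f where "f x = F x (u x)" for x
  from assms(6) have uW: "u \<in> W01p p \<Omega>" and upos: "AE x in ?M. u x > 0"
    and LIf: "locally_integrable_on \<Omega> f"
    and WS: "\<And>g \<phi> D\<phi>. weak_gradient \<Omega> u g \<Longrightarrow> C1c_grad \<Omega> \<phi> D\<phi> \<Longrightarrow>
       integral\<^sup>L ?M (\<lambda>x. norm (g x) powr (p - 2) * (g x \<bullet> D\<phi> x)) = integral\<^sup>L ?M (\<lambda>x. f x * \<phi> x)"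
    unfolding weak_solution_def f_def by auto
  from uW obtain g0 where g0w: "weak_gradient \<Omega> u g0" and g0L: "Lp_on p \<Omega> g0"
    unfolding W01p_def by auto
  have gm: "g0 \<in> borel_measurable ?M" and gi: "integrable ?M (\<lambda>x. norm (g0 x) powr p)"
    using g0L unfolding Lp_on_def by auto
  have fm: "f \<in> borel_measurable ?M" by (rule LI_meas[OF \<Omega>(1) LIf])
  have fnn: "AE x in ?M. 0 \<le> f x"
  proof -
    have "AE x in ?M. x \<in> \<Omega>" by (rule AE_I2) simp
    with upos show ?thesis
      by eventually_elim (use assms(5) in \<open>auto simp: caratheodory_nonneg_def f_def\<close>)
  qed
  have eq: "integrable ?M (\<lambda>x. f x * \<phi> x) \<and>
       integral\<^sup>L ?M (\<lambda>x. f x * \<phi> x) = integral\<^sup>L ?M (\<lambda>x. norm (g0 x) powr (p-2) * (g0 x \<bullet> D\<phi> x))"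
    if C: "C1c_grad \<Omega> \<phi> D\<phi>" for \<phi> D\<phi>
    using LI_mult_C1c[OF \<Omega>(1) LIf C] WS[OF g0w C] by simp
  let ?A = "integral\<^sup>L ?M (\<lambda>x. norm (g0 x) powr p)"
  have A0: "0 \<le> ?A" by (intro integral_nonneg_AE) auto
  have part2: "integrable ?M (\<lambda>x. f x * \<phi> x) \<and>
      (\<forall>g h. weak_gradient \<Omega> u g \<longrightarrow> weak_gradient \<Omega> \<phi> h \<longrightarrow>
         integral\<^sup>L ?M (\<lambda>x. norm (g x) powr (p - 2) * (g x \<bullet> h x)) = integral\<^sup>L ?M (\<lambda>x. f x * \<phi> x))"
    if \<phi>W: "\<phi> \<in> W01p p \<Omega>" for \<phi>
  proof -
    from \<phi>W obtain h0 \<phi>s D\<phi>s where \<phi>L: "Lp_on p \<Omega> \<phi>" and h0w: "weak_gradient \<Omega> \<phi> h0" and h0L: "Lp_on p \<Omega> h0"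
      and C: "\<And>k. C1c_grad \<Omega> (\<phi>s k) (D\<phi>s k)"
      and c1: "(\<lambda>k. integral\<^sup>L ?M (\<lambda>x. \<bar>\<phi>s k x - \<phi> x\<bar> powr p)) \<longlonglongrightarrow> 0"
      and c2: "(\<lambda>k. integral\<^sup>L ?M (\<lambda>x. norm (D\<phi>s k x - h0 x) powr p)) \<longlonglongrightarrow> 0"
      unfolding W01p_def by blast
    have \<phi>m: "\<phi> \<in> borel_measurable ?M" and \<phi>i: "integrable ?M (\<lambda>x. \<bar>\<phi> x\<bar> powr p)"
      using \<phi>L unfolding Lp_on_def by auto
    have hm: "h0 \<in> borel_measurable ?M" and hi: "integrable ?M (\<lambda>x. norm (h0 x) powr p)"
      using h0L unfolding Lp_on_def by auto
    note CL = C1c_Lp[OF \<Omega> C p0(1)]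
    have fpi: "integrable ?M (\<lambda>x. f x * \<bar>\<phi> x\<bar>)"
      by (rule main_bound(1)[OF \<Omega> p fm fnn _ gm gi C \<phi>m \<phi>i hm hi c1 c2]) (rule eq)
    have fphi: "integrable ?M (\<lambda>x. f x * \<phi> x)"
    proof (rule Bochner_Integration.integrable_bound[OF fpi])
      show "(\<lambda>x. f x * \<phi> x) \<in> borel_measurable ?M" using fm \<phi>m by measurable
      show "AE x in ?M. norm (f x * \<phi> x) \<le> norm (f x * \<bar>\<phi> x\<bar>)"
        using fnn by eventually_elim (simp add: abs_mult)
    qed
    have Rconv: "(\<lambda>k. integral\<^sup>L ?M (\<lambda>x. f x * \<phi>s k x)) \<longlonglongrightarrow> integral\<^sup>L ?M (\<lambda>x. f x * \<phi> x)"
    proof -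
      have bd: "\<bar>integral\<^sup>L ?M (\<lambda>x. f x * \<phi>s k x) - integral\<^sup>L ?M (\<lambda>x. f x * \<phi> x)\<bar>
          \<le> ?A / ((p/(p-1)) * t powr (p/(p-1))) + t powr p * (2 powr (p-1) / p) *
             integral\<^sup>L ?M (\<lambda>x. norm (D\<phi>s k x - h0 x) powr p)" if t: "0 < t" for t k
      proof -
        have Ck: "\<And>j. C1c_grad \<Omega> (\<lambda>x. \<phi>s j x - \<phi>s k x) (\<lambda>x. D\<phi>s j x - D\<phi>s k x)"
          by (rule C1c_diff[OF C C])
        have \<psi>m: "(\<lambda>x. \<phi> x - \<phi>s k x) \<in> borel_measurable ?M" using \<phi>m CL(1)[of k] by measurable
        have \<psi>i: "integrable ?M (\<lambda>x. \<bar>\<phi> x - \<phi>s k x\<bar> powr p)"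
          using Lp_diff[OF p0(2) \<phi>m CL(1)[of k]] \<phi>i CL(3)[of k] by simp
        have Hm: "(\<lambda>x. h0 x - D\<phi>s k x) \<in> borel_measurable ?M" using hm CL(2)[of k] by measurable
        have Hi: "integrable ?M (\<lambda>x. norm (h0 x - D\<phi>s k x) powr p)"
          by (rule Lp_diff[OF p0(2) hm CL(2) hi CL(4)])
        have c1': "(\<lambda>j. integral\<^sup>L ?M (\<lambda>x. \<bar>(\<phi>s j x - \<phi>s k x) - (\<phi> x - \<phi>s k x)\<bar> powr p)) \<longlonglongrightarrow> 0"
          using c1 by simp
        have c2': "(\<lambda>j. integral\<^sup>L ?M (\<lambda>x. norm ((D\<phi>s j x - D\<phi>s k x) - (h0 x - D\<phi>s k x)) powr p)) \<longlonglongrightarrow> 0"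
          using c2 by simp
        note MBk = main_bound[OF \<Omega> p fm fnn _ gm gi Ck \<psi>m \<psi>i Hm Hi c1' c2']
        have "integral\<^sup>L ?M (\<lambda>x. f x * \<phi>s k x) - integral\<^sup>L ?M (\<lambda>x. f x * \<phi> x)
            = - integral\<^sup>L ?M (\<lambda>x. f x * (\<phi> x - \<phi>s k x))"
          using eq[OF C] fphi by (simp add: right_diff_distrib Bochner_Integration.integral_diff)
        then have "\<bar>integral\<^sup>L ?M (\<lambda>x. f x * \<phi>s k x) - integral\<^sup>L ?M (\<lambda>x. f x * \<phi> x)\<bar>
            = \<bar>integral\<^sup>L ?M (\<lambda>x. f x * (\<phi> x - \<phi>s k x))\<bar>" by simp
        also have "\<dots> \<le> integral\<^sup>L ?M (\<lambda>x. \<bar>f x * (\<phi> x - \<phi>s k x)\<bar>)"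
          by (rule integral_abs_bound)
        also have "\<dots> = integral\<^sup>L ?M (\<lambda>x. f x * \<bar>\<phi> x - \<phi>s k x\<bar>)"
        proof (rule integral_cong_AE)
          show "AE x in ?M. \<bar>f x * (\<phi> x - \<phi>s k x)\<bar> = f x * \<bar>\<phi> x - \<phi>s k x\<bar>"
            using fnn by eventually_elim (simp add: abs_mult)
          show "(\<lambda>x. \<bar>f x * (\<phi> x - \<phi>s k x)\<bar>) \<in> borel_measurable ?M"
            using fm \<psi>m by measurable
          show "(\<lambda>x. f x * \<bar>\<phi> x - \<phi>s k x\<bar>) \<in> borel_measurable ?M"
            using fm \<psi>m by measurable
        qed
        also have "\<dots> \<le> ?A / ((p/(p-1)) * t powr (p/(p-1))) + t powr p / p * (2 powr (p-1) *
            integral\<^sup>L ?M (\<lambda>x. norm (h0 x - D\<phi>s k x) powr p))"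
          by (rule MBk(2)[OF eq t])
        also have "integral\<^sup>L ?M (\<lambda>x. norm (h0 x - D\<phi>s k x) powr p) = integral\<^sup>L ?M (\<lambda>x. norm (D\<phi>s k x - h0 x) powr p)"
          by (simp add: norm_minus_commute)
        finally show ?thesis by simp
      qed
      have "(\<lambda>k. integral\<^sup>L ?M (\<lambda>x. f x * \<phi>s k x) - integral\<^sup>L ?M (\<lambda>x. f x * \<phi> x)) \<longlonglongrightarrow> 0"
        by (rule eps_tend[OF bd c2 p A0])
      then show ?thesis by (simp add: LIM_zero_iff)
    qed
    have Lconv: "(\<lambda>k. integral\<^sup>L ?M (\<lambda>x. norm (g0 x) powr (p-2) * (g0 x \<bullet> D\<phi>s k x)))
        \<longlonglongrightarrow> integral\<^sup>L ?M (\<lambda>x. norm (g0 x) powr (p-2) * (g0 x \<bullet> h0 x))"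
    proof -
      have bd: "\<bar>integral\<^sup>L ?M (\<lambda>x. norm (g0 x) powr (p-2) * (g0 x \<bullet> D\<phi>s k x))
            - integral\<^sup>L ?M (\<lambda>x. norm (g0 x) powr (p-2) * (g0 x \<bullet> h0 x))\<bar>
          \<le> ?A / ((p/(p-1)) * t powr (p/(p-1))) + t powr p * (1 / p) *
             integral\<^sup>L ?M (\<lambda>x. norm (D\<phi>s k x - h0 x) powr p)" if t: "0 < t" for t k
      proof -
        have vm: "(\<lambda>x. D\<phi>s k x - h0 x) \<in> borel_measurable ?M" using hm CL(2)[of k] by measurable
        have vi: "integrable ?M (\<lambda>x. norm (D\<phi>s k x - h0 x) powr p)"
          by (rule Lp_diff[OF p0(2) CL(2) hm CL(4) hi])
        have i1: "integrable ?M (\<lambda>x. norm (g0 x) powr (p-2) * (g0 x \<bullet> D\<phi>s k x))"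
          by (rule young_int(1)[OF p zero_less_one gm gi CL(2) CL(4)])
        have i2: "integrable ?M (\<lambda>x. norm (g0 x) powr (p-2) * (g0 x \<bullet> h0 x))"
          by (rule young_int(1)[OF p zero_less_one gm gi hm hi])
        have "integral\<^sup>L ?M (\<lambda>x. norm (g0 x) powr (p-2) * (g0 x \<bullet> D\<phi>s k x))
            - integral\<^sup>L ?M (\<lambda>x. norm (g0 x) powr (p-2) * (g0 x \<bullet> h0 x))
          = integral\<^sup>L ?M (\<lambda>x. norm (g0 x) powr (p-2) * (g0 x \<bullet> D\<phi>s k x) - norm (g0 x) powr (p-2) * (g0 x \<bullet> h0 x))"
          by (rule Bochner_Integration.integral_diff[OF i1 i2, symmetric])
        also have "\<dots> = integral\<^sup>L ?M (\<lambda>x. norm (g0 x) powr (p-2) * (g0 x \<bullet> (D\<phi>s k x - h0 x)))"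
          by (simp add: inner_diff_right right_diff_distrib)
        finally have "\<bar>integral\<^sup>L ?M (\<lambda>x. norm (g0 x) powr (p-2) * (g0 x \<bullet> D\<phi>s k x))
            - integral\<^sup>L ?M (\<lambda>x. norm (g0 x) powr (p-2) * (g0 x \<bullet> h0 x))\<bar>
          = \<bar>integral\<^sup>L ?M (\<lambda>x. norm (g0 x) powr (p-2) * (g0 x \<bullet> (D\<phi>s k x - h0 x)))\<bar>" by simp
        also have "\<dots> \<le> ?A / ((p/(p-1)) * t powr (p/(p-1))) + t powr p / p * integral\<^sup>L ?M (\<lambda>x. norm (D\<phi>s k x - h0 x) powr p)"
          by (rule young_int(2)[OF p t gm gi vm vi])
        finally show ?thesis by simp
      qed
      have "(\<lambda>k. integral\<^sup>L ?M (\<lambda>x. norm (g0 x) powr (p-2) * (g0 x \<bullet> D\<phi>s k x))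
            - integral\<^sup>L ?M (\<lambda>x. norm (g0 x) powr (p-2) * (g0 x \<bullet> h0 x))) \<longlonglongrightarrow> 0"
        by (rule eps_tend[OF bd c2 p A0])
      then show ?thesis by (simp add: LIM_zero_iff)
    qed
    have same: "(\<lambda>k. integral\<^sup>L ?M (\<lambda>x. norm (g0 x) powr (p-2) * (g0 x \<bullet> D\<phi>s k x)))
        = (\<lambda>k. integral\<^sup>L ?M (\<lambda>x. f x * \<phi>s k x))"
      using eq[OF C] by simp
    have key: "integral\<^sup>L ?M (\<lambda>x. norm (g0 x) powr (p-2) * (g0 x \<bullet> h0 x)) = integral\<^sup>L ?M (\<lambda>x. f x * \<phi> x)"
      using LIMSEQ_unique[OF Lconv[unfolded same] Rconv] .
    show ?thesis
    proof (intro conjI allI impI fphi)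
      fix g h assume gw: "weak_gradient \<Omega> u g" and hw: "weak_gradient \<Omega> \<phi> h"
      have gg: "AE x in ?M. g x = g0 x" by (rule wg_unique[OF \<Omega>(1) gw g0w])
      have hh: "AE x in ?M. h x = h0 x" by (rule wg_unique[OF \<Omega>(1) hw h0w])
      have gm': "g \<in> borel_measurable ?M" using gw LI_meas[OF \<Omega>(1)] unfolding weak_gradient_def by blast
      have hm': "h \<in> borel_measurable ?M" using hw LI_meas[OF \<Omega>(1)] unfolding weak_gradient_def by blast
      have "integral\<^sup>L ?M (\<lambda>x. norm (g x) powr (p - 2) * (g x \<bullet> h x))
          = integral\<^sup>L ?M (\<lambda>x. norm (g0 x) powr (p - 2) * (g0 x \<bullet> h0 x))"
      proof (rule integral_cong_AE)
        show "AE x in ?M. norm (g x) powr (p - 2) * (g x \<bullet> h x) = norm (g0 x) powr (p - 2) * (g0 x \<bullet> h0 x)"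
          using gg hh by eventually_elim simp
        show "(\<lambda>x. norm (g x) powr (p - 2) * (g x \<bullet> h x)) \<in> borel_measurable ?M"
          using gm' hm' by measurable
        show "(\<lambda>x. norm (g0 x) powr (p - 2) * (g0 x \<bullet> h0 x)) \<in> borel_measurable ?M"
          using gm hm by measurable
      qed
      then show "integral\<^sup>L ?M (\<lambda>x. norm (g x) powr (p - 2) * (g x \<bullet> h x)) = integral\<^sup>L ?M (\<lambda>x. f x * \<phi> x)"
        using key by simp
    qed
  qed
  have P2: "\<forall>phi\<in>W01p p \<Omega>. integrable ?M (\<lambda>x. F x (u x) * phi x) \<and>
            (\<forall>g h. weak_gradient \<Omega> u g \<longrightarrow> weak_gradient \<Omega> phi h \<longrightarrow>
               integral\<^sup>L ?M (\<lambda>x. norm (g x) powr (p - 2) * (g x \<bullet> h x))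
               = integral\<^sup>L ?M (\<lambda>x. F x (u x) * phi x))"
  proof (intro ballI)
    fix phi assume "phi \<in> W01p p \<Omega>"
    from part2[OF this] show "integrable ?M (\<lambda>x. F x (u x) * phi x) \<and>
            (\<forall>g h. weak_gradient \<Omega> u g \<longrightarrow> weak_gradient \<Omega> phi h \<longrightarrow>
               integral\<^sup>L ?M (\<lambda>x. norm (g x) powr (p - 2) * (g x \<bullet> h x))
               = integral\<^sup>L ?M (\<lambda>x. F x (u x) * phi x))" unfolding f_def .
  qed
  then show ?thesis by blast
qed

end
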